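(* Let $d\geq1$, let $A\subset\mathbb{R}^d$ have positive reach and let $a\in T_d(A)\cap\partial A$. Then: (i) If $d\geq 2$, there exist $\varepsilon>0$, $u\in S^{d-1}$ and a Lipschitz semiconcave function $f:u^\perp\to\mathbb{R}$ such that $A\cap B(a,\varepsilon)=\operatorname{hyp}_uf\cap B(a,\varepsilon)$. (ii) There exist a convex body $K\subset\mathbb{R}^d$ and a surjective $C^{1,1}$-diffeomorphism $\Phi:\mathbb{R}^d\to\mathbb{R}^d$ such that $\Phi(K)$ is a neighbourhood of $a$ in $A$.
   Context: A set has positive reach if there is $\varepsilon>0$ such that every point at distance less than $\varepsilon$ from it has a unique nearest point in it. $\operatorname{Tan}(A,x)$ is the tangent cone ($u\in\operatorname{Tan}(A,x)$ iff $u=0$ or $r_i(x_i-x)\to u$ for some $x\neq x_i\in A$, $x_i\to x$, $r_i>0$), and $T_d(A)$ is the set of $x\in A$ with $\dim\operatorname{span}\operatorname{Tan}(A,x)=d$. For a unit vector $u$ and $f:u^\perp\to\mathbb{R}$, $\operatorname{hyp}_uf=\{w+tu:w\in u^\perp,\ t\leq f(w)\}$. $f$ is semiconcave if $w\mapsto f(w)-\frac c2|w|^2$ is concave on $u^\perp$ for some $c\geq0$. A convex body is a compact convex set with nonempty interior. A $C^{1,1}$-diffeomorphism is a bijection between open sets such that it and its inverse have Lipschitz derivatives. $N\subset A$ is a neighbourhood of $a$ in $A$ if $A\cap B(a,\delta)\subset N$ for some $\delta>0$. *)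

theory Defs
  imports "HOL-Analysis.Analysis"
begin

definition positive_reach :: "'a::euclidean_space set \<Rightarrow> bool" where
  "positive_reach A \<longleftrightarrow> (\<exists>\<epsilon>>0. \<forall>x. infdist x A < \<epsilon> \<longrightarrow>
      (\<exists>!p. p \<in> A \<and> (\<forall>q\<in>A. dist x p \<le> dist x q)))"

definition Tan :: "'a::euclidean_space set \<Rightarrow> 'a \<Rightarrow> 'a set" where
  "Tan A x = {u. u = 0 \<or> (\<exists>xs r. (\<forall>i. xs i \<in> A \<and> xs i \<noteq> x) \<and> xs \<longlonglongrightarrow> x \<and>
      (\<forall>i. r i > (0::real)) \<and> (\<lambda>i. r i *\<^sub>R (xs i - x)) \<longlonglongrightarrow> u)}"

definition T_dim :: "'a::euclidean_space set \<Rightarrow> nat \<Rightarrow> 'a set" where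
  "T_dim A d = {x \<in> A. dim (span (Tan A x)) = d}"

definition perp :: "'a::euclidean_space \<Rightarrow> 'a set" where
  "perp u = {w. w \<bullet> u = 0}"

definition hyp :: "'a::euclidean_space \<Rightarrow> ('a \<Rightarrow> real) \<Rightarrow> 'a set" where
  "hyp u f = {w + t *\<^sub>R u | w t. w \<in> perp u \<and> t \<le> f w}"

definition semiconcave :: "'a::euclidean_space \<Rightarrow> ('a \<Rightarrow> real) \<Rightarrow> bool" where
  "semiconcave u f \<longleftrightarrow> (\<exists>c\<ge>0. concave_on (perp u) (\<lambda>w. f w - c / 2 * (norm w)\<^sup>2))"

definition convex_body :: "'a::euclidean_space set \<Rightarrow> bool" where
  "convex_body K \<longleftrightarrow> compact K \<and> convex K \<and> interior K \<noteq> {}"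

definition C11_diffeo :: "('a::euclidean_space \<Rightarrow> 'a) \<Rightarrow> 'a set \<Rightarrow> 'a set \<Rightarrow> bool" where
  "C11_diffeo \<Phi> U V \<longleftrightarrow> open U \<and> open V \<and> bij_betw \<Phi> U V \<and>
     (\<exists>D. (\<forall>x\<in>U. (\<Phi> has_derivative blinfun_apply (D x)) (at x)) \<and> (\<exists>L. L-lipschitz_on U D)) \<and>
     (\<exists>E. (\<forall>y\<in>V. (inv_into U \<Phi> has_derivative blinfun_apply (E y)) (at y)) \<and> (\<exists>L. L-lipschitz_on V E))"

definition nbhd_in :: "'a::metric_space set \<Rightarrow> 'a set \<Rightarrow> 'a \<Rightarrow> bool" where
  "nbhd_in N A a \<longleftrightarrow> N \<subseteq> A \<and> (\<exists>\<delta>>0. A \<inter> ball a \<delta> \<subseteq> N)"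

end

theory Submission
  imports Defs
begin

definition isnear :: "'a::metric_space set \<Rightarrow> 'a \<Rightarrow> 'a \<Rightarrow> bool" where
  "isnear A x p \<longleftrightarrow> p \<in> A \<and> (\<forall>q\<in>A. dist x p \<le> dist x q)"

locale preach =
  fixes A :: "'a::euclidean_space set" and eps :: real
  assumes eps_pos: "eps > 0"
  and uniq: "\<And>x. infdist x A < eps \<Longrightarrow> \<exists>!p. isnear A x p"
begin

lemma A_ne: "A \<noteq> {}"
proof
  assume "A = {}"
  then have "infdist 0 A < eps" using eps_pos by (simp add: infdist_def)
  then obtain p where "isnear A 0 p" using uniq by blast
  then show False using \<open>A = {}\<close> by (simp add: isnear_def)
qed

lemma isnear_dist: "isnear A x p \<Longrightarrow> dist x p = infdist x A"
  unfolding isnear_def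
  by (metis A_ne antisym cINF_greatest infdist_le infdist_notempty)

lemma A_closed: "closed A"
proof -
  have "closure A \<subseteq> A"
  proof
    fix x assume "x \<in> closure A"
    then have "infdist x A = 0" using in_closure_iff_infdist_zero A_ne by blast
    then obtain p where p: "isnear A x p" using uniq eps_pos by (metis)
    then have "dist x p = 0" using isnear_dist \<open>infdist x A = 0\<close> by simp
    then show "x \<in> A" using p by (simp add: isnear_def)
  qed
  then show ?thesis using closure_subset_eq by blast
qed

definition proj where "proj x = (THE p. isnear A x p)"

lemma proj: "infdist x A < eps \<Longrightarrow> isnear A x (proj x)"
  unfolding proj_def using uniq by (rule theI')

lemma proj_eq: "infdist x A < eps \<Longrightarrow> isnear A x p \<Longrightarrow> proj x = p"
  unfolding proj_def using uniq by (rule the1_equality)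

lemma proj_in: "infdist x A < eps \<Longrightarrow> proj x \<in> A"
  using proj isnear_def by blast

lemma proj_dist: "infdist x A < eps \<Longrightarrow> dist x (proj x) = infdist x A"
  using proj isnear_dist by blast

lemma seq_to: 
  fixes X :: "nat \<Rightarrow> 'b::metric_space"
  assumes "\<And>n. dist (X n) x < 1 / Suc n" shows "X \<longlonglongrightarrow> x"
proof -
  have "(\<lambda>n. dist (X n) x) \<longlonglongrightarrow> 0"
  proof (rule tendsto_sandwich[of "\<lambda>n. 0" _ _ "\<lambda>n. 1 / Suc n"])
    show "\<forall>\<^sub>F n in sequentially. 0 \<le> dist (X n) x" by simp
    show "\<forall>\<^sub>F n in sequentially. dist (X n) x \<le> 1 / Suc n" using assms by (intro always_eventually allI less_imp_le)
    show "(\<lambda>n. 1 / real (Suc n)) \<longlonglongrightarrow> 0" using LIMSEQ_inverse_real_of_nat by (simp add: inverse_eq_divide)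
  qed simp
  then show ?thesis using tendsto_dist_iff by blast
qed

lemma proj_cont: "continuous_on {x. infdist x A < eps} proj"
  unfolding continuous_on_iff
proof (intro ballI allI impI)
  fix x e assume x: "x \<in> {x. infdist x A < eps}" and e: "(0::real) < e"
  show "\<exists>d>0. \<forall>x'\<in>{x. infdist x A < eps}. dist x' x < d \<longrightarrow> dist (proj x') (proj x) < e"
  proof (rule ccontr)
    assume "\<not> ?thesis"
    then have nd: "\<forall>d>0. \<exists>x'. infdist x' A < eps \<and> dist x' x < d \<and> e \<le> dist (proj x') (proj x)"
      by (auto simp: not_less) (meson not_le)
    have "\<forall>n::nat. \<exists>x'. infdist x' A < eps \<and> dist x' x < 1 / Suc n \<and> e \<le> dist (proj x') (proj x)"
    proof
      fix n :: nat
      have "(0::real) < 1 / Suc n" by simp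
      then show "\<exists>x'. infdist x' A < eps \<and> dist x' x < 1 / Suc n \<and> e \<le> dist (proj x') (proj x)"
        using nd by blast
    qed
    then obtain X where X0: "\<forall>n. infdist (X n) A < eps \<and> dist (X n) x < 1 / Suc n \<and> e \<le> dist (proj (X n)) (proj x)"
      by (rule choice[THEN exE]) blast
    then have X: "\<And>n. infdist (X n) A < eps" "\<And>n. dist (X n) x < 1 / Suc n"
      "\<And>n. e \<le> dist (proj (X n)) (proj x)" by auto
    have Xx: "X \<longlonglongrightarrow> x" using X(2) seq_to by blast
    define P where "P n = proj (X n)" for n
    have PK: "P n \<in> A \<inter> cball x (infdist x A + 2)" for n
    proof -
      have "dist x (P n) \<le> dist x (X n) + dist (X n) (P n)" by (rule dist_triangle)
      also have "dist (X n) (P n) = infdist (X n) A" using proj_dist X(1) P_def by simp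
      also have "infdist (X n) A \<le> infdist x A + dist (X n) x" by (rule infdist_triangle)
      finally have "dist x (P n) \<le> infdist x A + 2 * dist (X n) x" by (simp add: dist_commute)
      moreover have "dist (X n) x \<le> 1"
      proof -
        have "1 / real (Suc n) \<le> 1" by simp
        then show ?thesis using X(2)[of n] by linarith
      qed
      ultimately show ?thesis using proj_in X(1) P_def by auto
    qed
    have "compact (A \<inter> cball x (infdist x A + 2))"
      using A_closed compact_cball by (simp add: closed_Int_compact)
    then have "seq_compact (A \<inter> cball x (infdist x A + 2))" by (rule compact_imp_seq_compact)
    then obtain l r where l: "l \<in> A \<inter> cball x (infdist x A + 2)" "strict_mono (r::nat\<Rightarrow>nat)" "(P \<circ> r) \<longlonglongrightarrow> l"
      using PK seq_compactE by blast
    have Xr: "(X \<circ> r) \<longlonglongrightarrow> x" using Xx l(2) LIMSEQ_subseq_LIMSEQ by blast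
    have "isnear A x l"
      unfolding isnear_def
    proof (intro conjI ballI)
      show "l \<in> A" using l by auto
      fix q assume q: "q \<in> A"
      have "\<forall>n. dist ((X \<circ> r) n) ((P \<circ> r) n) \<le> dist ((X \<circ> r) n) q"
        using proj X(1) q P_def by (simp add: isnear_def)
      moreover have "(\<lambda>n. dist ((X \<circ> r) n) ((P \<circ> r) n)) \<longlonglongrightarrow> dist x l"
        using Xr l(3) by (intro tendsto_intros)
      moreover have "(\<lambda>n. dist ((X \<circ> r) n) q) \<longlonglongrightarrow> dist x q"
        using Xr by (intro tendsto_intros)
      ultimately show "dist x l \<le> dist x q"
        by (meson LIMSEQ_le)
    qed
    then have "l = proj x" using proj_eq x by simp
    moreover have "(\<lambda>n. dist ((P \<circ> r) n) (proj x)) \<longlonglongrightarrow> dist l (proj x)"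
      using l(3) by (intro tendsto_intros)
    moreover have "\<forall>n. e \<le> dist ((P \<circ> r) n) (proj x)" using X(3) P_def by simp
    ultimately have "e \<le> dist l (proj x)"
      using LIMSEQ_le_const by blast
    then have "e \<le> 0" using \<open>l = proj x\<close> by simp
    then show False using e by simp
  qed
qed

end

lemma norm_add_sq: "(norm (a + b))^2 = (norm a)^2 + 2*(a \<bullet> b) + (norm (b::'a::real_inner))^2"
  by (simp add: power2_norm_eq_inner inner_add_left inner_add_right inner_commute)

lemma inner_ge_neg: "norm (v::'a::real_inner) = 1 \<Longrightarrow> - norm x \<le> x \<bullet> v"
  using Cauchy_Schwarz_ineq2[of x v] by (simp add: abs_le_iff)

context preach begin

definition near where "near q v t \<longleftrightarrow> (\<forall>y\<in>A. t \<le> dist (q + t *\<^sub>R v) y)"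

lemma near_down: assumes "near q v t" "0 \<le> t'" "t' \<le> t" "norm v = 1" shows "near q v t'"
  unfolding near_def
proof
  fix y assume y: "y \<in> A"
  have "dist (q + t *\<^sub>R v) (q + t' *\<^sub>R v) = t - t'"
    using assms by (simp add: dist_norm scaleR_diff_left[symmetric] del: scaleR_diff_left)
  moreover have "dist (q + t *\<^sub>R v) y \<le> dist (q + t *\<^sub>R v) (q + t' *\<^sub>R v) + dist (q + t' *\<^sub>R v) y"
    by (rule dist_triangle)
  moreover have "t \<le> dist (q + t *\<^sub>R v) y" using assms(1) y near_def by blast
  ultimately show "t' \<le> dist (q + t' *\<^sub>R v) y" by linarith
qed

lemma near_isnear: "q \<in> A \<Longrightarrow> near q v t \<Longrightarrow> 0 \<le> t \<Longrightarrow> norm v = 1 \<Longrightarrow> isnear A (q + t *\<^sub>R v) q"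
  unfolding near_def isnear_def by (simp add: dist_norm)

lemma isnear_near: "isnear A (q + t *\<^sub>R v) q \<Longrightarrow> 0 \<le> t \<Longrightarrow> norm v = 1 \<Longrightarrow> near q v t"
  unfolding near_def isnear_def by (simp add: dist_norm)

lemma near_closed: "closed {t. near q v t}"
proof -
  have "{t. near q v t} = (\<Inter>y\<in>A. {t. t \<le> dist (q + t *\<^sub>R v) y})"
    unfolding near_def by auto
  moreover have "closed {t. t \<le> dist (q + t *\<^sub>R v) y}" for y
    by (intro closed_Collect_le continuous_intros)
  ultimately show ?thesis by (simp add: closed_INT)
qed

lemma ray_step:
  assumes q: "q \<in> A" and v: "norm v = 1" and tau: "0 < \<tau>" "\<tau> < eps" and nr: "near q v \<tau>" and H: "0 < H"
  shows "\<exists>h>0. h \<le> H \<and> near q v (\<tau> + h)"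
proof -
  define z0 where "z0 = q + \<tau> *\<^sub>R v"
  have dz0: "dist z0 q = \<tau>" using v tau by (simp add: z0_def dist_norm)
  have inz0: "isnear A z0 q" using near_isnear q nr tau v z0_def by simp
  have idz0: "infdist z0 A = \<tau>" using isnear_dist inz0 dz0 by simp
  have pz0: "proj z0 = q" using proj_eq idz0 tau inz0 by simp
  define S where "S = {x. infdist x A < eps} \<inter> {x. 0 < infdist x A}"
  have openS: "open S" unfolding S_def
    by (intro open_Int open_Collect_less continuous_intros)
  have z0S: "z0 \<in> S" using idz0 tau S_def by simp
  define n where "n x = (1 / infdist x A) *\<^sub>R (x - proj x)" for x
  have contp: "continuous_on S proj" by (rule continuous_on_subset[OF proj_cont]) (auto simp: S_def)
  have contn: "continuous_on S n" unfolding n_def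
    by (intro continuous_intros contp) (auto simp: S_def)
  have "n z0 = (1/\<tau>) *\<^sub>R (z0 - q)" by (simp add: n_def idz0 pz0)
  then have nz0: "n z0 = v" using tau by (simp add: z0_def)
  obtain e0 where e0: "e0 > 0" "ball z0 e0 \<subseteq> S" using openS z0S open_contains_ball by blast
  obtain e1 where e1: "e1 > 0" "\<forall>z\<in>S. dist z z0 < e1 \<longrightarrow> dist (proj z) (proj z0) < \<tau>/2"
    using contp z0S tau unfolding continuous_on_iff by (metis half_gt_zero)
  obtain e2 where e2: "e2 > 0" "\<forall>z\<in>S. dist z z0 < e2 \<longrightarrow> dist (n z) (n z0) < 1/5"
    using contn z0S unfolding continuous_on_iff by (metis divide_pos_pos zero_less_one zero_less_numeral)
  define d1 where "d1 = min e0 (min e1 e2)"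
  have d1: "d1 > 0" using e0 e1 e2 d1_def by simp
  have near_z0: "z \<in> S \<and> dist (proj z) q < \<tau>/2 \<and> dist (n z) v < 1/5" if "dist z z0 < d1" for z
  proof -
    have "z \<in> S" using that e0 d1_def by (auto simp: dist_commute subset_iff)
    then show ?thesis using that e1 e2 d1_def pz0 nz0 by auto
  qed
  define h where "h = min H (min (d1/3) \<tau>)"
  have h: "0 < h" "h \<le> H" "h \<le> d1/3" "h \<le> \<tau>" using H d1 tau h_def by auto
  define c where "c = z0 + h *\<^sub>R v"
  define D where "D = cball c (h/4)"
  have DS: "dist z z0 < d1" if "z \<in> D" for z
  proof -
    have "dist z z0 \<le> dist z c + dist c z0" by (rule dist_triangle)
    also have "dist c z0 = h" using v h by (simp add: c_def dist_norm)
    finally show ?thesis using that D_def h by (auto simp: dist_commute)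
  qed
  have cS: "c \<in> S" using DS near_z0 D_def h by auto
  define pc where "pc = proj c"
  have pcA: "pc \<in> A" using proj_in cS S_def pc_def by auto
  have dpc: "dist c pc = infdist c A" using proj_dist cS S_def pc_def by auto
  have pcq: "norm (q - pc) < \<tau>/2" using near_z0[of c] DS[of c] D_def h pc_def
    by (auto simp: dist_norm norm_minus_commute)
  have ge1: "\<tau> \<le> norm (z0 - pc)" using idz0 infdist_le[OF pcA, of z0] by (simp add: dist_norm)
  have ge2: "\<tau>/2 \<le> (z0 - pc) \<bullet> v"
  proof -
    have "(z0 - pc) \<bullet> v = (q - pc) \<bullet> v + \<tau>" using v
      by (simp add: z0_def inner_add_left inner_diff_left power2_norm_eq_inner[symmetric] algebra_simps)
    then show ?thesis using inner_ge_neg[OF v, of "q - pc"] pcq by linarith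
  qed
  have dc_low: "\<tau> + h/3 \<le> infdist c A"
  proof -
    have "(infdist c A)^2 = (norm ((z0 - pc) + h *\<^sub>R v))^2" using dpc
      by (simp add: c_def dist_norm algebra_simps)
    also have "\<dots> = (norm (z0 - pc))^2 + 2 * h * ((z0 - pc) \<bullet> v) + h^2"
      using v by (simp add: norm_add_sq)
    finally have eq: "(infdist c A)^2 = (norm (z0 - pc))^2 + 2 * h * ((z0 - pc) \<bullet> v) + h^2" .
    have "\<tau>^2 \<le> (norm (z0 - pc))^2" using ge1 tau by (simp add: power_mono)
    moreover have "h * \<tau> \<le> 2 * h * ((z0 - pc) \<bullet> v)"
    proof -
      have "2*h*(\<tau>/2) \<le> 2*h*((z0-pc) \<bullet> v)" using ge2 h by (intro mult_left_mono) auto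
      then show ?thesis by simp
    qed
    moreover have "(\<tau> + h/3)^2 = \<tau>^2 + (2/3)*(h*\<tau>) + (1/9)*(h*h)" by (simp add: power2_eq_square algebra_simps)
    moreover have "0 \<le> h*\<tau>" "0 \<le> h*h" using h tau by auto
    moreover have "h^2 = h*h" by (simp add: power2_eq_square)
    ultimately have "(\<tau> + h/3)^2 \<le> (infdist c A)^2" using eq by linarith
    then show ?thesis using infdist_nonneg power2_le_imp_le by blast
  qed
  have dc_up: "infdist c A \<le> \<tau> + h"
  proof -
    have "dist c q = \<tau> + h" using v h tau by (simp add: c_def z0_def dist_norm algebra_simps flip: scaleR_add_left)
    then show ?thesis using infdist_le[OF q, of c] by simp
  qed
  have dz_bounds: "\<tau> + h/12 \<le> infdist z A \<and> infdist z A \<le> \<tau> + 5*h/4" if "z \<in> D" for z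
  proof -
    have "\<bar>infdist z A - infdist c A\<bar> \<le> dist z c" by (rule infdist_triangle_abs)
    moreover have "dist z c \<le> h/4" using that D_def by (simp add: dist_commute)
    ultimately show ?thesis using dc_low dc_up by linarith
  qed
  define M where "M z = proj z + \<tau> *\<^sub>R n z + (infdist z A - \<tau>) *\<^sub>R v" for z
  have zrep: "z = proj z + infdist z A *\<^sub>R n z" if "z \<in> S" for z
    using that by (simp add: n_def S_def)
  have DsubS: "D \<subseteq> S" using DS near_z0 by blast
  have zM: "z - M z = (infdist z A - \<tau>) *\<^sub>R (n z - v)" if "z \<in> D" for z
  proof -
    have "z - M z = (proj z + infdist z A *\<^sub>R n z) - M z" using zrep[of z] that DsubS by auto
    also have "\<dots> = (infdist z A - \<tau>) *\<^sub>R (n z - v)" by (simp add: M_def algebra_simps)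
    finally show ?thesis .
  qed
  have zMsmall: "norm (z - M z) \<le> h/4" if "z \<in> D" for z
  proof -
    have "norm (z - M z) = \<bar>infdist z A - \<tau>\<bar> * norm (n z - v)" using zM[OF that] by simp
    also have "\<dots> \<le> (5*h/4) * (1/5)"
    proof (rule mult_mono)
      show "\<bar>infdist z A - \<tau>\<bar> \<le> 5*h/4" using dz_bounds[OF that] h by auto
      show "norm (n z - v) \<le> 1/5" using near_z0[OF DS[OF that]] by (simp add: dist_norm)
    qed (use h in auto)
    finally show ?thesis by simp
  qed
  have contM: "continuous_on D M" unfolding M_def
    using DsubS by (intro continuous_intros continuous_on_subset[OF contp] continuous_on_subset[OF contn]) auto
  obtain z where zD: "z \<in> D" and fz: "c + (z - M z) = z"
  proof (rule brouwer[of D "\<lambda>z. c + (z - M z)"])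
    show "compact D" "convex D" "D \<noteq> {}" using D_def h by auto
    show "continuous_on D (\<lambda>z. c + (z - M z))" by (intro continuous_intros contM)
    show "(\<lambda>z. c + (z - M z)) \<in> D \<rightarrow> D"
    proof
      fix z assume "z \<in> D"
      then have "norm (z - M z) \<le> h/4" by (rule zMsmall)
      then show "c + (z - M z) \<in> D" by (simp add: D_def dist_norm norm_minus_commute)
    qed
  qed auto
  have Mz: "M z = c" using fz by (simp add: algebra_simps)
  define p where "p = proj z"
  define s where "s = infdist z A"
  define nn where "nn = n z"
  have zS: "z \<in> S" using zD DsubS by auto
  have s_b: "\<tau> < s" "s \<le> \<tau> + 5*h/4" using dz_bounds[OF zD] h s_def by auto
  have pA: "p \<in> A" using proj_in zS S_def p_def by auto
  have zeq: "z = p + s *\<^sub>R nn" using zrep[OF zS] p_def s_def nn_def by simp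
  have nn1: "norm nn = 1"
  proof -
    have "dist z p = s" using proj_dist zS S_def p_def s_def by auto
    then have "norm (s *\<^sub>R nn) = s" using zeq by (simp add: dist_norm)
    then show ?thesis using s_b tau by simp
  qed
  have inz: "isnear A z p" using proj zS S_def p_def by auto
  have nps: "near p nn s" using isnear_near[of p s nn] inz zeq s_b tau nn1 by simp
  have npt: "near p nn \<tau>" using near_down[OF nps] s_b tau nn1 by simp
  define w where "w = p + \<tau> *\<^sub>R nn"
  have inw: "isnear A w p" using near_isnear[OF pA npt] tau nn1 w_def by simp
  define lam where "lam = 2*\<tau> + h - s"
  have weq: "w = q + lam *\<^sub>R v"
  proof -
    have "p + \<tau> *\<^sub>R nn + (s - \<tau>) *\<^sub>R v = q + (\<tau> + h) *\<^sub>R v"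
      using Mz by (simp add: M_def p_def nn_def s_def c_def z0_def algebra_simps)
    then have "w = q + (\<tau> + h) *\<^sub>R v - (s - \<tau>) *\<^sub>R v" by (simp add: w_def algebra_simps)
    also have "\<dots> = q + ((\<tau> + h) - (s - \<tau>)) *\<^sub>R v" by (simp only: scaleR_diff_left add_diff_eq)
    also have "(\<tau> + h) - (s - \<tau>) = lam" by (simp add: lam_def)
    finally show ?thesis .
  qed
  have lam_pos: "0 < lam" using s_b h lam_def by linarith
  have dwp: "dist w p = \<tau>" using tau nn1 by (simp add: w_def dist_norm)
  have pq: "norm (q - p) < \<tau>/2" using near_z0[OF DS[OF zD]] p_def by (simp add: dist_norm norm_minus_commute)
  show ?thesis
  proof (cases "lam \<le> \<tau>")
    case True
    have "near q v lam" using near_down[OF nr] lam_pos True v by simp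
    then have inwq: "isnear A w q" using near_isnear[OF q] lam_pos v weq by simp
    have idw: "infdist w A < eps" using isnear_dist[OF inw] dwp tau by simp
    have "p = q" using proj_eq[OF idw inw] proj_eq[OF idw inwq] by simp
    then have "\<tau> *\<^sub>R nn = lam *\<^sub>R v" using weq w_def by simp
    then have "norm (\<tau> *\<^sub>R nn) = norm (lam *\<^sub>R v)" by simp
    then have "\<tau> = lam" using tau lam_pos nn1 v by simp
    then have "nn = v" using \<open>\<tau> *\<^sub>R nn = lam *\<^sub>R v\<close> tau by simp
    have "s = \<tau> + h" using \<open>\<tau> = lam\<close> lam_def by simp
    then have "z = q + (\<tau> + h) *\<^sub>R v" using zeq \<open>p = q\<close> \<open>nn = v\<close> by simp
    then have "isnear A (q + (\<tau> + h) *\<^sub>R v) q" using inz \<open>p = q\<close> by simp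
    then have "near q v (\<tau> + h)" using isnear_near v h tau by simp
    then show ?thesis using h by blast
  next
    case False
    have wp: "w - p = (z0 - p) + (lam - \<tau>) *\<^sub>R v" using weq by (simp add: z0_def algebra_simps)
    have "(dist w p)^2 = (norm ((z0 - p) + (lam - \<tau>) *\<^sub>R v))^2" by (simp only: dist_norm wp)
    also have "\<dots> = (norm (z0 - p))^2 + 2 * (lam - \<tau>) * ((z0 - p) \<bullet> v) + (lam - \<tau>)^2"
      using v by (simp add: norm_add_sq)
    finally have eq: "\<tau>^2 = (norm (z0 - p))^2 + 2 * (lam - \<tau>) * ((z0 - p) \<bullet> v) + (lam - \<tau>)^2"
      using dwp by simp
    have g1: "\<tau>^2 \<le> (norm (z0 - p))^2"
      using idz0 infdist_le[OF pA, of z0] tau by (simp add: dist_norm power_mono)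
    have "(z0 - p) \<bullet> v = (q - p) \<bullet> v + \<tau>" using v
      by (simp add: z0_def inner_add_left inner_diff_left power2_norm_eq_inner[symmetric] algebra_simps)
    then have g2: "0 < (z0 - p) \<bullet> v" using inner_ge_neg[OF v, of "q - p"] pq tau by linarith
    have "0 < 2 * (lam - \<tau>) * ((z0 - p) \<bullet> v)" using False g2 by simp
    moreover have "0 < (lam - \<tau>)^2" using False by simp
    ultimately show ?thesis using eq g1 by linarith
  qed
qed

end

definition nrm :: "'a::euclidean_space set \<Rightarrow> real \<Rightarrow> 'a \<Rightarrow> 'a \<Rightarrow> bool" where
  "nrm A r q v \<longleftrightarrow> norm v = 1 \<and> (\<forall>y\<in>A. 2*r*(v \<bullet> (y - q)) \<le> (norm (y - q))^2)"

context preach begin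

lemma ray:
  assumes q: "q \<in> A" and v: "norm v = 1" and T: "0 < T" "near q v T" and R: "0 \<le> R" "R < eps"
  shows "near q v R"
proof (cases "R \<le> T")
  case True then show ?thesis using near_down T R v by blast
next
  case False
  define SS where "SS = {t. near q v t} \<inter> {0..R}"
  have TS: "T \<in> SS" using T False SS_def by auto
  have bdd: "bdd_above SS" unfolding SS_def by (rule bdd_aboveI[of _ R]) auto
  have cl: "closed SS" unfolding SS_def by (intro closed_Int near_closed closed_atLeastAtMost)
  define tau where "tau = Sup SS"
  have tS: "tau \<in> SS" using closed_contains_Sup[of SS] TS bdd cl tau_def by blast
  have Tt: "T \<le> tau" using cSup_upper[OF TS bdd] tau_def by simp
  show ?thesis
  proof (rule ccontr)
    assume nR: "\<not> near q v R"
    have "tau \<le> R" using tS SS_def by auto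
    moreover have "tau \<noteq> R" using tS nR SS_def by auto
    ultimately have tR: "tau < R" by simp
    have ntau: "near q v tau" using tS SS_def by auto
    have "0 < tau" "tau < eps" "0 < R - tau" using T Tt tR R by auto
    then obtain h where h: "0 < h" "h \<le> R - tau" "near q v (tau + h)"
      using ray_step[OF q v _ _ ntau, of "R - tau"] by blast
    have "tau + h \<in> SS" using h Tt T SS_def by auto
    then have "tau + h \<le> Sup SS" using cSup_upper[OF _ bdd] by blast
    then have "tau + h \<le> tau" using tau_def by simp
    then show False using h by simp
  qed
qed

lemma normal_ineq:
  assumes x: "infdist x A < eps" "x \<notin> A" and r: "0 < r" "r < eps"
  shows "nrm A r (proj x) ((1 / infdist x A) *\<^sub>R (x - proj x))"
proof -
  define d where "d = infdist x A"
  define q where "q = proj x"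
  define v where "v = (1 / d) *\<^sub>R (x - q)"
  have dpos: "0 < d" using infdist_pos_not_in_closed[OF A_closed A_ne x(2)] d_def by simp
  have qA: "q \<in> A" using proj_in x q_def by simp
  have dxq: "dist x q = d" using proj_dist x q_def d_def by simp
  have v1: "norm v = 1" using dxq dpos by (simp add: v_def dist_norm)
  have xeq: "x = q + d *\<^sub>R v" using dpos by (simp add: v_def)
  have "isnear A x q" using proj x q_def by simp
  then have "near q v d" using isnear_near[of q d v] xeq dpos v1 by simp
  then have nr: "near q v r" using ray[OF qA v1 dpos] r by simp
  have ineq: "2*r*(v \<bullet> (y - q)) \<le> (norm (y - q))^2" if y: "y \<in> A" for y
  proof -
    have "r \<le> dist (q + r *\<^sub>R v) y" using nr y near_def by blast
    then have "r^2 \<le> (norm ((q - y) + r *\<^sub>R v))^2"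
      using r by (simp add: dist_norm power_mono algebra_simps)
    also have "\<dots> = (norm (q - y))^2 + 2 * r * ((q - y) \<bullet> v) + r^2"
      using v1 by (simp add: norm_add_sq)
    finally have "0 \<le> (norm (q - y))^2 + 2 * r * ((q - y) \<bullet> v)" by simp
    moreover have "(q - y) \<bullet> v = - (v \<bullet> (y - q))" by (simp add: inner_commute inner_diff_left inner_diff_right)
    moreover have "norm (q - y) = norm (y - q)" by (rule norm_minus_commute)
    ultimately show ?thesis by simp
  qed
  have "nrm A r q v" unfolding nrm_def using v1 ineq by blast
  then show ?thesis unfolding v_def q_def d_def .
qed

end

lemma tan_normal:
  fixes A :: "'a::euclidean_space set"
  assumes v: "nrm A r a v" and r: "r > 0" and w: "w \<in> Tan A a"
  shows "v \<bullet> w \<le> 0"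
proof (cases "w = 0")
  case True then show ?thesis by simp
next
  case False
  then obtain xs rs where xs: "\<And>i. xs i \<in> A" "xs \<longlonglongrightarrow> a" "\<And>i. rs i > (0::real)"
    "(\<lambda>i. rs i *\<^sub>R (xs i - a)) \<longlonglongrightarrow> w"
    using w unfolding Tan_def by blast
  define W where "W i = rs i *\<^sub>R (xs i - a)" for i
  have ineq: "v \<bullet> W i \<le> norm (W i) * norm (xs i - a) / (2*r)" for i
  proof -
    have "2*r*(v \<bullet> (xs i - a)) \<le> (norm (xs i - a))^2" using v xs(1) nrm_def by blast
    then have "rs i * (2*r*(v \<bullet> (xs i - a))) \<le> rs i * (norm (xs i - a))^2"
      using xs(3)[of i] by (intro mult_left_mono) auto
    moreover have "rs i * (2*r*(v \<bullet> (xs i - a))) = 2*r*(v \<bullet> W i)" by (simp add: W_def)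
    moreover have "rs i * (norm (xs i - a))^2 = norm (W i) * norm (xs i - a)"
      using xs(3)[of i] by (simp add: W_def power2_eq_square)
    ultimately have "2*r*(v \<bullet> W i) \<le> norm (W i) * norm (xs i - a)" by simp
    then show ?thesis using r by (simp add: field_simps)
  qed
  have Wl: "W \<longlonglongrightarrow> w" using xs(4) by (simp add: W_def[abs_def])
  have l1: "(\<lambda>i. v \<bullet> W i) \<longlonglongrightarrow> v \<bullet> w" by (rule tendsto_inner[OF tendsto_const Wl])
  have "(\<lambda>i. xs i - a) \<longlonglongrightarrow> a - a" using xs(2) by (intro tendsto_diff tendsto_const)
  then have n0: "(\<lambda>i. norm (xs i - a)) \<longlonglongrightarrow> norm (a - a)" by (rule tendsto_norm)
  have "(\<lambda>i. norm (W i) * norm (xs i - a)) \<longlonglongrightarrow> norm w * norm (a - a)"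
    by (rule tendsto_mult[OF tendsto_norm[OF Wl] n0])
  then have "(\<lambda>i. norm (W i) * norm (xs i - a) / (2*r)) \<longlonglongrightarrow> norm w * norm (a - a) / (2*r)"
    using r by (intro tendsto_divide tendsto_const) auto
  then have l2: "(\<lambda>i. norm (W i) * norm (xs i - a) / (2*r)) \<longlonglongrightarrow> 0" by simp
  show ?thesis using l1 l2 ineq by (meson LIMSEQ_le)
qed

lemma exists_u:
  fixes T :: "'a::euclidean_space set"
  assumes "span T = UNIV"
  shows "\<exists>u. norm u = 1 \<and> (\<forall>v. norm v = 1 \<and> (\<forall>w\<in>T. v \<bullet> w \<le> 0) \<longrightarrow> 0 < v \<bullet> u)"
proof -
  obtain B where B: "B \<subseteq> T" "independent B" "T \<subseteq> span B" by (rule maximal_independent_subset)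
  have fB: "finite B" using B(2) by (rule independent_imp_finite)
  have spB: "span B = UNIV" using B(3) assms by (metis span_mono span_span top.extremum_uniqueI)
  define u' where "u' = - sum id B"
  have pos: "0 < v \<bullet> u'" if v: "norm v = 1" "\<forall>w\<in>T. v \<bullet> w \<le> 0" for v
  proof -
    have vb: "\<forall>b\<in>B. 0 \<le> - (v \<bullet> b)" using v B(1) by auto
    have eq: "v \<bullet> u' = (\<Sum>b\<in>B. - (v \<bullet> b))" by (simp add: u'_def inner_sum_right sum_negf)
    have "v \<bullet> u' \<noteq> 0"
    proof
      assume "v \<bullet> u' = 0"
      then have "(\<Sum>b\<in>B. - (v \<bullet> b)) = 0" using eq by simp
      then have "\<forall>b\<in>B. - (v \<bullet> b) = 0" using sum_nonneg_eq_0_iff[OF fB, of "\<lambda>b. - (v \<bullet> b)"] vb by blast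
      then have "\<And>b. b \<in> B \<Longrightarrow> orthogonal v b" by (simp add: orthogonal_def)
      then have "orthogonal v v" using orthogonal_to_span[of v B v] spB by auto
      then show False using v by (simp add: orthogonal_def)
    qed
    moreover have "0 \<le> v \<bullet> u'" using eq vb by (simp add: sum_nonneg)
    ultimately show ?thesis by simp
  qed
  show ?thesis
  proof (cases "u' = 0")
    case True
    obtain b :: 'a where "b \<in> Basis" using nonempty_Basis by blast
    then have "norm b = 1" by simp
    moreover have "\<forall>v. norm v = 1 \<and> (\<forall>w\<in>T. v \<bullet> w \<le> 0) \<longrightarrow> 0 < v \<bullet> b"
      using pos True by auto
    ultimately show ?thesis by blast
  next
    case False
    define u where "u = (1 / norm u') *\<^sub>R u'"
    have "norm u = 1" using False by (simp add: u_def)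
    moreover have "0 < v \<bullet> u" if "norm v = 1 \<and> (\<forall>w\<in>T. v \<bullet> w \<le> 0)" for v
      using pos[of v] that False by (simp add: u_def)
    ultimately show ?thesis by blast
  qed
qed

lemma semicont:
  fixes A :: "'a::euclidean_space set"
  assumes u: "\<forall>v. nrm A r a v \<longrightarrow> 0 < v \<bullet> u" and r: "r > 0"
  shows "\<exists>\<rho>>0. \<exists>c>0. \<forall>q v. norm (q - a) \<le> \<rho> \<and> nrm A r q v \<longrightarrow> c \<le> v \<bullet> u"
proof (rule ccontr)
  assume "\<not> ?thesis"
  then have nd: "\<forall>\<rho>>0. \<forall>c>0. \<exists>q v. norm (q - a) \<le> \<rho> \<and> nrm A r q v \<and> v \<bullet> u < c"
    by (auto simp: not_less) (meson not_le)
  have "\<forall>n::nat. \<exists>q v. norm (q - a) \<le> 1 / Suc n \<and> nrm A r q v \<and> v \<bullet> u < 1 / Suc n"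
  proof
    fix n :: nat
    have "(0::real) < 1 / Suc n" by simp
    then show "\<exists>q v. norm (q - a) \<le> 1 / Suc n \<and> nrm A r q v \<and> v \<bullet> u < 1 / Suc n" using nd by blast
  qed
  then obtain Q V where QV: "\<forall>n. norm (Q n - a) \<le> 1 / Suc n \<and> nrm A r (Q n) (V n) \<and> V n \<bullet> u < 1 / Suc n"
    by metis
  have VS: "\<forall>n. V n \<in> sphere 0 1" using QV by (simp add: nrm_def)
  have "seq_compact (sphere (0::'a) 1)" by (intro compact_imp_seq_compact compact_sphere)
  then obtain l s where l: "l \<in> sphere 0 1" "strict_mono (s::nat\<Rightarrow>nat)" "(V \<circ> s) \<longlonglongrightarrow> l"
    using VS seq_compactE by blast
  have inv0: "(\<lambda>n. 1 / real (Suc n)) \<longlonglongrightarrow> 0" using LIMSEQ_inverse_real_of_nat by (simp add: inverse_eq_divide)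
  have Qa: "Q \<longlonglongrightarrow> a"
  proof -
    have "(\<lambda>n. norm (Q n - a)) \<longlonglongrightarrow> 0"
    proof (rule tendsto_sandwich[of "\<lambda>n. 0" _ _ "\<lambda>n. 1 / Suc n"])
      show "\<forall>\<^sub>F n in sequentially. 0 \<le> norm (Q n - a)" by simp
      show "\<forall>\<^sub>F n in sequentially. norm (Q n - a) \<le> 1 / Suc n" using QV by (intro always_eventually allI) blast
    qed (use inv0 in simp_all)
    then show ?thesis using tendsto_norm_zero_iff[of "\<lambda>n. Q n - a"] LIM_zero_iff[of Q a] by simp
  qed
  then have Qs: "(Q \<circ> s) \<longlonglongrightarrow> a" using l(2) LIMSEQ_subseq_LIMSEQ by blast
  have "nrm A r a l" unfolding nrm_def
  proof (intro conjI ballI)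
    show "norm l = 1" using l(1) by simp
    fix y assume y: "y \<in> A"
    have "\<forall>n. 2*r*((V \<circ> s) n \<bullet> (y - (Q \<circ> s) n)) \<le> (norm (y - (Q \<circ> s) n))^2"
      using QV y by (simp add: nrm_def)
    moreover have "(\<lambda>n. 2*r*((V \<circ> s) n \<bullet> (y - (Q \<circ> s) n))) \<longlonglongrightarrow> 2*r*(l \<bullet> (y - a))"
      using l(3) Qs by (intro tendsto_intros)
    moreover have "(\<lambda>n. (norm (y - (Q \<circ> s) n))^2) \<longlonglongrightarrow> (norm (y - a))^2"
      using Qs by (intro tendsto_intros)
    ultimately show "2*r*(l \<bullet> (y - a)) \<le> (norm (y - a))^2" by (meson LIMSEQ_le)
  qed
  then have pos: "0 < l \<bullet> u" using u by blast
  have "\<forall>n. (V \<circ> s) n \<bullet> u \<le> ((\<lambda>n. 1 / real (Suc n)) \<circ> s) n" using QV by (simp add: less_imp_le del: of_nat_Suc)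
  moreover have "(\<lambda>n. (V \<circ> s) n \<bullet> u) \<longlonglongrightarrow> l \<bullet> u" using l(3) by (intro tendsto_intros)
  moreover have "((\<lambda>n. 1 / real (Suc n)) \<circ> s) \<longlonglongrightarrow> 0" using inv0 l(2) LIMSEQ_subseq_LIMSEQ by blast
  ultimately have "l \<bullet> u \<le> 0" by (meson LIMSEQ_le)
  then show False using pos by simp
qed

definition prj :: "'a::real_inner \<Rightarrow> 'a \<Rightarrow> 'a" where "prj u w = w - (w \<bullet> u) *\<^sub>R u"

lemma uu1: "norm (u::'a::real_inner) = 1 \<Longrightarrow> u \<bullet> u = 1"
  by (metis norm_eq_sqrt_inner real_sqrt_eq_1_iff)

lemma prj_orth: "norm u = 1 \<Longrightarrow> prj u w \<bullet> u = 0"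
  by (simp add: prj_def inner_diff_left uu1)

lemma prj_diff: "prj u x - prj u y = prj u (x - y)"
  by (simp add: prj_def inner_diff_left algebra_simps)

lemma prj_perp: "norm u = 1 \<Longrightarrow> prj u w \<in> perp u"
  using prj_orth by (simp add: perp_def)

lemma prj_id: "w \<in> perp u \<Longrightarrow> prj u w = w"
  by (simp add: prj_def perp_def)

lemma inner_prj: "v \<bullet> prj u x = v \<bullet> x - (x \<bullet> u) * (v \<bullet> u)"
  by (simp add: prj_def inner_diff_right)

lemma prj_decomp: "x = prj u x + (x \<bullet> u) *\<^sub>R u"
  by (simp add: prj_def)

lemma norm_decomp: assumes "norm u = 1" shows "(norm x)^2 = (norm (prj u x))^2 + (x \<bullet> u)^2"
proof -
  have "(norm x)^2 = (norm (prj u x + (x \<bullet> u) *\<^sub>R u))^2" using prj_decomp[of x u] by simp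
  also have "\<dots> = (norm (prj u x))^2 + 2 * (prj u x \<bullet> ((x \<bullet> u) *\<^sub>R u)) + (norm ((x \<bullet> u) *\<^sub>R u))^2"
    by (rule norm_add_sq)
  also have "prj u x \<bullet> ((x \<bullet> u) *\<^sub>R u) = 0" using prj_orth[OF assms] by simp
  also have "(norm ((x \<bullet> u) *\<^sub>R u))^2 = (x \<bullet> u)^2" using assms by (simp add: power2_eq_square)
  finally show ?thesis by simp
qed

lemma norm_prj_le: "norm u = 1 \<Longrightarrow> norm (prj u x) \<le> norm x"
  using norm_decomp[of u x] by (metis le_add_same_cancel1 norm_ge_zero power2_le_imp_le zero_le_power2)

lemma hyp_iff: assumes u: "norm u = 1" shows "y \<in> hyp u f \<longleftrightarrow> y \<bullet> u \<le> f (prj u y)"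
proof
  assume "y \<in> hyp u f"
  then obtain w t where wt: "y = w + t *\<^sub>R u" "w \<in> perp u" "t \<le> f w" unfolding hyp_def by blast
  have wu: "w \<bullet> u = 0" using wt(2) by (simp add: perp_def)
  have "y \<bullet> u = t" using wt(1) wu u by (simp add: inner_add_left uu1)
  moreover have "prj u y = w" using wt(1) wu u \<open>y \<bullet> u = t\<close> by (simp add: prj_def)
  ultimately show "y \<bullet> u \<le> f (prj u y)" using wt(3) by simp
next
  assume "y \<bullet> u \<le> f (prj u y)"
  moreover have "y = prj u y + (y \<bullet> u) *\<^sub>R u" by (rule prj_decomp)
  moreover have "prj u y \<in> perp u" using prj_perp[OF u] .
  ultimately show "y \<in> hyp u f" unfolding hyp_def by blast
qed

lemma min_sq_lip: "\<bar>min ((norm x)^2) 1 - min ((norm y)^2) 1\<bar> \<le> 2 * norm (x - y)"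
proof -
  define m where "m = min (norm x) 1"
  define m' where "m' = min (norm y) 1"
  have e1: "min ((norm x)^2) 1 = m^2"
  proof (cases "norm x \<le> 1")
    case True then have "(norm x)^2 \<le> 1" by (simp add: power_le_one)
    then show ?thesis using True by (simp add: m_def)
  next
    case False then have "1 < (norm x)^2" by (intro one_less_power) auto
    then show ?thesis using False by (simp add: m_def)
  qed
  have e2: "min ((norm y)^2) 1 = m'^2"
  proof (cases "norm y \<le> 1")
    case True then have "(norm y)^2 \<le> 1" by (simp add: power_le_one)
    then show ?thesis using True by (simp add: m'_def)
  next
    case False then have "1 < (norm y)^2" by (intro one_less_power) auto
    then show ?thesis using False by (simp add: m'_def)
  qed
  have m0: "0 \<le> m + m'" using m_def m'_def by simp
  have "m^2 - m'^2 = (m + m') * (m - m')" by (simp add: power2_eq_square algebra_simps)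
  then have "\<bar>m^2 - m'^2\<bar> = \<bar>m + m'\<bar> * \<bar>m - m'\<bar>" by (simp add: abs_mult)
  then have "\<bar>m^2 - m'^2\<bar> = (m + m') * \<bar>m - m'\<bar>" using m0 by simp
  also have "\<dots> \<le> 2 * \<bar>m - m'\<bar>"
    using m_def m'_def by (intro mult_right_mono) auto
  also have "\<bar>m - m'\<bar> \<le> \<bar>norm x - norm y\<bar>" unfolding m_def m'_def by (simp add: min_def)
  also have "\<bar>norm x - norm y\<bar> \<le> norm (x - y)" by (rule norm_triangle_ineq3)
  finally show ?thesis using e1 e2 by simp
qed

lemma sq_convex:
  fixes x y :: "'a::real_inner"
  assumes "0 \<le> l" "0 \<le> m" "l + m = 1"
  shows "(norm (l *\<^sub>R x + m *\<^sub>R y))^2 \<le> l * (norm x)^2 + m * (norm y)^2"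
proof -
  have e1: "(norm (l *\<^sub>R x + m *\<^sub>R y))^2 = l^2 * (norm x)^2 + 2*l*m*(x \<bullet> y) + m^2 * (norm y)^2"
    by (simp add: norm_add_sq power_mult_distrib)
  have e2: "(norm (x - y))^2 = (norm x)^2 - 2*(x \<bullet> y) + (norm y)^2"
    using norm_add_sq[of x "-y"] by simp
  have "l * (norm x)^2 + m * (norm y)^2 - (norm (l *\<^sub>R x + m *\<^sub>R y))^2 = l*m*(norm (x - y))^2"
  proof -
    have m: "m = 1 - l" using assms(3) by simp
    show ?thesis unfolding e1 e2 by (simp add: m power2_eq_square algebra_simps)
  qed
  moreover have "0 \<le> l*m*(norm (x - y))^2" using assms by simp
  ultimately show ?thesis by linarith
qed

lemma scal:
  fixes s a Z \<beta> c r :: real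
  assumes c: "0 < c" "c \<le> \<beta>" "\<beta> \<le> 1" and r: "0 < r" and s: "\<bar>s\<bar> \<le> r*c"
    and Z: "0 \<le> Z" "Z \<le> r" "\<bar>a\<bar> \<le> Z"
    and ineq: "2*r*(a + s*\<beta>) \<le> Z^2 + s^2"
  shows "s \<le> -a/\<beta> + (1 + 9/c^2)/(2*r*c) * Z^2"
proof -
  have b: "0 < \<beta>" using c by simp
  have KZ: "0 \<le> (1 + 9/c^2)/(2*r*c) * Z^2" using c r by simp
  show ?thesis
  proof (cases "s \<le> -a/\<beta>")
    case True then show ?thesis using KZ by linarith
  next
    case False
    then have sb: "-a < s*\<beta>" using b by (simp add: field_simps)
    have s3: "\<bar>s\<bar> * c \<le> 3*Z"
    proof (cases "0 \<le> s")
      case True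
      have "r*c \<le> r*\<beta>" using c r by (intro mult_left_mono) auto
      then have "s \<le> r*\<beta>" using s True by linarith
      then have "s * s \<le> s * (r * \<beta>)" using True by (intro mult_left_mono) auto
      moreover have "Z*Z \<le> r*Z" using Z by (intro mult_right_mono) auto
      moreover have "-a \<le> Z" using Z by linarith
      then have "r*(-a) \<le> r*Z" using r by (intro mult_left_mono) auto
      ultimately have "r*(\<beta>* s) \<le> r*(3*Z)" using ineq by (simp add: power2_eq_square algebra_simps)
      then have "\<beta>* s \<le> 3*Z" using r by simp
      moreover have "c* s \<le> \<beta>* s" using c True by (intro mult_right_mono) auto
      ultimately show ?thesis using True by (simp add: mult.commute)
    next
      case False
      have "(-s)*\<beta> < Z" using sb Z by linarith
      moreover have "(-s)*c \<le> (-s)*\<beta>" using c False by (intro mult_left_mono) auto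
      moreover have "\<bar>s\<bar> * c = (-s)*c" using False by simp
      ultimately show ?thesis using Z by linarith
    qed
    have "(\<bar>s\<bar> * c)^2 \<le> (3*Z)^2" using s3 c by (intro power_mono) auto
    then have ss: "s^2 * c^2 \<le> 9 * Z^2" by (simp add: power_mult_distrib)
    have ss2: "s^2 \<le> (9/c^2) * Z^2" using ss c by (simp add: field_simps)
    define W where "W = Z^2 * (1 + 9/c^2)"
    have W0: "0 \<le> W" using W_def c by simp
    have "s * (2*r*\<beta>) \<le> W - 2*r*a" using ineq ss2 unfolding W_def by (simp add: algebra_simps)
    then have "s \<le> (W - 2*r*a) / (2*r*\<beta>)" using r b by (simp add: pos_le_divide_eq)
    also have "(W - 2*r*a) / (2*r*\<beta>) = W / (2*r*\<beta>) - a/\<beta>" using r b by (simp add: field_simps)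
    also have "W / (2*r*\<beta>) \<le> W / (2*r*c)" using W0 r c by (intro divide_left_mono) auto
    also have "W / (2*r*c) = (1 + 9/c^2)/(2*r*c) * Z^2" by (simp add: W_def)
    finally show ?thesis by simp
  qed
qed

lemma scal2:
  fixes \<beta> \<delta> K :: real
  assumes "0 < \<beta>" "\<beta> \<le> 1" "0 < \<delta>" "0 \<le> K" "K*\<delta> < 1"
  shows "- (\<delta> * (1 - \<beta>^2)) / \<beta> + K * min (\<delta>^2 * (1 - \<beta>^2)) 1 < \<delta> * \<beta>"
proof -
  have n0: "0 \<le> 1 - \<beta>^2" using assms by (simp add: power_le_one)
  have "\<delta> * (1 - \<beta>^2) * \<beta> \<le> \<delta> * (1 - \<beta>^2) * 1"
    using assms n0 by (intro mult_left_mono) auto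
  then have "\<delta> * (1 - \<beta>^2) \<le> \<delta> * (1 - \<beta>^2) / \<beta>" using assms by (simp add: le_divide_eq)
  moreover have "min (\<delta>^2 * (1 - \<beta>^2)) 1 \<le> \<delta>^2"
  proof -
    have "\<delta>^2 * (1 - \<beta>^2) \<le> \<delta>^2 * 1" using assms by (intro mult_left_mono) auto
    then show ?thesis by simp
  qed
  then have "K * min (\<delta>^2 * (1 - \<beta>^2)) 1 \<le> K * \<delta>^2" using assms by (intro mult_left_mono) auto
  moreover have "K * \<delta>^2 < \<delta>" using assms by (simp add: power2_eq_square)
  moreover have "\<beta>^2 \<le> \<beta>" using assms by (simp add: power2_eq_square mult_le_cancel_left1)
  then have "\<delta> * \<beta>^2 \<le> \<delta> * \<beta>" using assms by (intro mult_left_mono) auto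
  moreover have "\<delta> * (1 - \<beta>^2) = \<delta> - \<delta> * \<beta>^2" by (simp add: algebra_simps)
  moreover have "- (\<delta> * (1 - \<beta>^2)) / \<beta> = - (\<delta> * (1 - \<beta>^2) / \<beta>)" by simp
  ultimately show ?thesis by linarith
qed

lemma prj_scale: "prj u (c *\<^sub>R x) = c *\<^sub>R prj u x"
  by (simp add: prj_def algebra_simps)

lemma abs_inner_le1: "norm (u::'a::real_inner) = 1 \<Longrightarrow> \<bar>x \<bullet> u\<bar> \<le> norm x"
  using Cauchy_Schwarz_ineq2[of x u] by simp

lemma min_part_concave:
  fixes p x y :: "'a::real_inner"
  assumes lm: "0 \<le> l" "0 \<le> m" "l + m = 1"
  shows "l*(min ((norm (x-p))^2) 1 - (norm x)^2) + m*(min ((norm (y-p))^2) 1 - (norm y)^2)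
     \<le> min ((norm (l *\<^sub>R x + m *\<^sub>R y - p))^2) 1 - (norm (l *\<^sub>R x + m *\<^sub>R y))^2"
proof -
  define z where "z = l *\<^sub>R x + m *\<^sub>R y"
  define L where "L w = (norm p)^2 - 2*(w \<bullet> p)" for w
  have eqw: "min ((norm (w-p))^2) 1 - (norm w)^2 = min (L w) (1 - (norm w)^2)" for w
  proof -
    have "(norm (w-p))^2 = (norm w)^2 - 2*(w \<bullet> p) + (norm p)^2"
      using norm_add_sq[of w "-p"] by simp
    then show ?thesis by (simp add: L_def min_def)
  qed
  have lin: "L z = l * L x + m * L y"
  proof -
    have "z \<bullet> p = l * (x \<bullet> p) + m * (y \<bullet> p)" by (simp add: z_def inner_add_left)
    moreover have "(norm p)^2 = l * (norm p)^2 + m * (norm p)^2" using lm(3) by (simp add: algebra_simps flip: distrib_right)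
    ultimately show ?thesis unfolding L_def by (simp add: algebra_simps)
  qed
  have cv: "l * (1 - (norm x)^2) + m * (1 - (norm y)^2) \<le> 1 - (norm z)^2"
    using sq_convex[OF lm, of x y] lm(3) unfolding z_def by (simp add: algebra_simps)
  have a1: "l * min (L x) (1 - (norm x)^2) \<le> l * L x" using lm by (intro mult_left_mono) auto
  have a2: "m * min (L y) (1 - (norm y)^2) \<le> m * L y" using lm by (intro mult_left_mono) auto
  have b1: "l * min (L x) (1 - (norm x)^2) \<le> l * (1 - (norm x)^2)" using lm by (intro mult_left_mono) auto
  have b2: "m * min (L y) (1 - (norm y)^2) \<le> m * (1 - (norm y)^2)" using lm by (intro mult_left_mono) auto
  have "l * min (L x) (1 - (norm x)^2) + m * min (L y) (1 - (norm y)^2) \<le> min (L z) (1 - (norm z)^2)"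
    using a1 a2 b1 b2 lin cv by simp
  then show ?thesis unfolding eqw z_def .
qed

lemma comb_eq:
  fixes Q X Y Dx Dy K l m b :: real
  shows "l * (Q - X / b + K * Dx) + m * (Q - Y / b + K * Dy) = (l + m) * Q - (l * X + m * Y) / b + K * (l * Dx + m * Dy)"
  by (simp add: algebra_simps add_divide_distrib diff_divide_distrib)

lemma main_i:
  fixes A :: "'a::euclidean_space set" and a :: 'a
  assumes PR: "preach A eps" and aA: "a \<in> A" and sp: "span (Tan A a) = UNIV"
  shows "\<exists>e>0. \<exists>u f K. norm u = 1 \<and> (\<exists>L. L-lipschitz_on (perp u) f) \<and> 0 \<le> K \<and>
            concave_on (perp u) (\<lambda>w. f w - K * (norm w)^2) \<and>
            A \<inter> ball a e = hyp u f \<inter> ball a e"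
proof -
  interpret preach A eps by (rule PR)
  define r where "r = eps/2"
  have r: "0 < r" "r < eps" using eps_pos r_def by auto
  obtain u where u1: "norm u = 1" and upos: "\<forall>v. norm v = 1 \<and> (\<forall>w\<in>Tan A a. v \<bullet> w \<le> 0) \<longrightarrow> 0 < v \<bullet> u"
    using exists_u[OF sp] by blast
  have "\<forall>v. nrm A r a v \<longrightarrow> 0 < v \<bullet> u"
  proof (intro allI impI)
    fix v assume v: "nrm A r a v"
    then have "norm v = 1" by (simp add: nrm_def)
    moreover have "\<forall>w\<in>Tan A a. v \<bullet> w \<le> 0" using tan_normal[OF v r(1)] by blast
    ultimately show "0 < v \<bullet> u" using upos by blast
  qed
  then obtain \<rho> c where rho: "\<rho> > 0" "c > 0" and semi: "\<forall>q v. norm (q - a) \<le> \<rho> \<and> nrm A r q v \<longrightarrow> c \<le> v \<bullet> u"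
    using semicont[OF _ r(1)] by blast
  define c1 where "c1 = min c 1"
  have c1: "0 < c1" "c1 \<le> 1" "c1 \<le> c" using rho c1_def by auto
  define \<rho>1 where "\<rho>1 = min \<rho> (min (r*c1/2) (min (r/2) (1/2)))"
  have rho1: "0 < \<rho>1" "\<rho>1 \<le> \<rho>" "\<rho>1 \<le> r*c1/2" "\<rho>1 \<le> r/2" "\<rho>1 \<le> 1/2"
    using rho r c1 \<rho>1_def by auto
  define K where "K = (1 + 9/c1^2)/(2*r*c1)"
  have "0 < 1 + 9/c1^2" using c1 by (simp add: add_pos_nonneg)
  moreover have "0 < 2*r*c1" using c1 r by simp
  ultimately have K: "0 < K" unfolding K_def by (rule divide_pos_pos)
  define e where "e = min (\<rho>1/2) (1/(2*K))"
  have e: "0 < e" "e \<le> \<rho>1/2" "e \<le> 1/(2*K)" using rho1 K e_def by auto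
  have eK: "K * e \<le> 1/2" using e K by (simp add: le_divide_eq algebra_simps)
  define fam where "fam q v \<longleftrightarrow> q \<in> A \<and> norm (q - a) \<le> \<rho>1 \<and> nrm A r q v" for q v
  define \<phi> where "\<phi> q v w = q \<bullet> u - (v \<bullet> (w - prj u q)) / (v \<bullet> u) + K * min ((norm (w - prj u q))^2) 1" for q v w
  define M where "M = a \<bullet> u + 1"
  define S where "S w = insert M {\<phi> q v w | q v. fam q v}" for w
  define f where "f w = Inf (S w)" for w
  have famb: "c1 \<le> v \<bullet> u \<and> v \<bullet> u \<le> 1 \<and> norm v = 1" if "fam q v" for q v
  proof -
    have nv: "norm v = 1" using that by (simp add: fam_def nrm_def)
    have fq': "norm (q - a) \<le> \<rho>" "nrm A r q v" using that rho1 by (auto simp: fam_def)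
    have "c \<le> v \<bullet> u" using semi fq' by blast
    moreover have "v \<bullet> u \<le> 1" using norm_cauchy_schwarz[of v u] nv u1 by simp
    ultimately show ?thesis using c1 nv by simp
  qed
  have famq: "norm q \<le> norm a + 1" if "fam q v" for q v
  proof -
    have "norm q \<le> norm a + norm (q - a)" by (metis add_diff_cancel_left' norm_triangle_ineq diff_add_cancel add.commute)
    then show ?thesis using that rho1 by (auto simp: fam_def)
  qed
  define LB where "LB (w::'a) = -(norm a + 1) - (norm w + (norm a + 1))/c1" for w
  have philb: "LB w \<le> \<phi> q v w" if fq: "fam q v" for q v w
  proof -
    have b: "c1 \<le> v \<bullet> u" "norm v = 1" using famb[OF fq] by auto
    have bp: "0 < v \<bullet> u" using b c1 by simp
    have "v \<bullet> (w - prj u q) \<le> norm (w - prj u q)" using norm_cauchy_schwarz[of v "w - prj u q"] b by simp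
    also have "\<dots> \<le> norm w + norm (prj u q)" by (rule norm_triangle_ineq4)
    also have "\<dots> \<le> norm w + (norm a + 1)" using norm_prj_le[OF u1, of q] famq[OF fq] by simp
    finally have i1: "v \<bullet> (w - prj u q) \<le> norm w + (norm a + 1)" .
    have "(v \<bullet> (w - prj u q)) / (v \<bullet> u) \<le> (norm w + (norm a + 1)) / (v \<bullet> u)"
      using i1 bp by (simp add: divide_right_mono)
    also have "\<dots> \<le> (norm w + (norm a + 1)) / c1"
      using b c1 by (intro divide_left_mono) auto
    finally have i2: "(v \<bullet> (w - prj u q)) / (v \<bullet> u) \<le> (norm w + (norm a + 1)) / c1" .
    have "- norm q \<le> q \<bullet> u" using inner_ge_neg[OF u1, of q] .
    then have i3: "-(norm a + 1) \<le> q \<bullet> u" using famq[OF fq] by simp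
    have i4: "0 \<le> K * min ((norm (w - prj u q))^2) 1" using K by simp
    show ?thesis unfolding LB_def \<phi>_def using i2 i3 i4 by linarith
  qed
  have Mlb: "LB w \<le> M" for w
  proof -
    have "- norm a \<le> a \<bullet> u" using inner_ge_neg[OF u1, of a] .
    moreover have "0 \<le> (norm w + (norm a + 1))/c1" using c1 by simp
    ultimately show ?thesis unfolding LB_def M_def by linarith
  qed
  have bdd: "bdd_below (S w)" for w
    unfolding S_def by (rule bdd_belowI[of _ "LB w"]) (use philb Mlb in auto)
  have f_le_phi: "f w \<le> \<phi> q v w" if "fam q v" for q v w
    unfolding f_def by (rule cInf_lower[OF _ bdd]) (use that S_def in auto)
  have f_le_M: "f w \<le> M" for w
    unfolding f_def by (rule cInf_lower[OF _ bdd]) (simp add: S_def)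
  have f_ge: "t \<le> f w" if "\<And>q v. fam q v \<Longrightarrow> t \<le> \<phi> q v w" "t \<le> M" for t w
    unfolding f_def by (rule cInf_greatest) (use that S_def in auto)
  define L where "L = 1/c1 + 2*K"
  have L0: "0 \<le> L" using c1 K L_def by simp
  have philip: "\<phi> q v w \<le> \<phi> q v w' + L * norm (w - w')" if fq: "fam q v" for q v w w'
  proof -
    have b: "c1 \<le> v \<bullet> u" "norm v = 1" using famb[OF fq] by auto
    have bp: "0 < v \<bullet> u" using b c1 by simp
    have "(v \<bullet> (w' - prj u q)) - (v \<bullet> (w - prj u q)) = v \<bullet> (w' - w)" by (simp add: inner_diff_right)
    also have "\<dots> \<le> norm (w' - w)" using norm_cauchy_schwarz[of v "w' - w"] b by simp
    finally have "(v \<bullet> (w' - prj u q)) - (v \<bullet> (w - prj u q)) \<le> norm (w - w')" by (simp add: norm_minus_commute)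
    then have "((v \<bullet> (w' - prj u q)) - (v \<bullet> (w - prj u q))) / (v \<bullet> u) \<le> norm (w - w') / (v \<bullet> u)"
      using bp by (simp add: divide_right_mono)
    also have "\<dots> \<le> norm (w - w') / c1" using b c1 by (intro divide_left_mono) auto
    finally have i1: "(v \<bullet> (w' - prj u q)) / (v \<bullet> u) - (v \<bullet> (w - prj u q)) / (v \<bullet> u) \<le> norm (w - w') / c1"
      by (simp add: diff_divide_distrib)
    have "min ((norm (w - prj u q))^2) 1 - min ((norm (w' - prj u q))^2) 1 \<le> 2 * norm ((w - prj u q) - (w' - prj u q))"
      using min_sq_lip[of "w - prj u q" "w' - prj u q"] by simp
    then have "K * (min ((norm (w - prj u q))^2) 1 - min ((norm (w' - prj u q))^2) 1) \<le> K * (2 * norm (w - w'))"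
      using K by (intro mult_left_mono) auto
    then have i2: "K * min ((norm (w - prj u q))^2) 1 - K * min ((norm (w' - prj u q))^2) 1 \<le> 2 * K * norm (w - w')"
      by (simp add: algebra_simps)
    have "L * norm (w - w') = norm (w - w') / c1 + 2 * K * norm (w - w')" by (simp add: L_def algebra_simps)
    then show ?thesis unfolding \<phi>_def using i1 i2 by linarith
  qed
  have flip1: "f w \<le> f w' + L * norm (w - w')" for w w'
  proof -
    have "f w - L * norm (w - w') \<le> f w'"
    proof (rule f_ge)
      fix q v assume fq: "fam q v"
      show "f w - L * norm (w - w') \<le> \<phi> q v w'"
        using f_le_phi[OF fq, of w] philip[OF fq, of w w'] by linarith
    next
      have "0 \<le> L * norm (w - w')" using L0 by simp
      then show "f w - L * norm (w - w') \<le> M" using f_le_M[of w] by linarith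
    qed
    then show ?thesis by simp
  qed
  have lip: "L-lipschitz_on (perp u) f"
  proof (rule lipschitz_onI[OF _ L0])
    fix x y assume "x \<in> perp u" "y \<in> perp u"
    have "f x \<le> f y + L * norm (x - y)" by (rule flip1)
    moreover have "f y \<le> f x + L * norm (x - y)" using flip1[of y x] by (simp add: norm_minus_commute)
    ultimately show "dist (f x) (f y) \<le> L * dist x y" by (simp add: dist_real_def dist_norm abs_le_iff)
  qed
  have phiconc: "l * (\<phi> q v x - K * (norm x)^2) + m * (\<phi> q v y - K * (norm y)^2)
      \<le> \<phi> q v (l *\<^sub>R x + m *\<^sub>R y) - K * (norm (l *\<^sub>R x + m *\<^sub>R y))^2"
    if fq: "fam q v" and lm: "0 \<le> l" "0 \<le> m" "l + m = 1" for q v x y l m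
  proof -
    define p where "p = prj u q"
    define \<beta> where "\<beta> = v \<bullet> u"
    define z where "z = l *\<^sub>R x + m *\<^sub>R y"
    have aff: "l * (v \<bullet> (x - p)) + m * (v \<bullet> (y - p)) = v \<bullet> (z - p)"
    proof -
      have "z - p = l *\<^sub>R (x - p) + m *\<^sub>R (y - p)" using lm(3) by (simp add: z_def algebra_simps flip: scaleR_add_left)
      then show ?thesis by (simp add: inner_add_right)
    qed
    define Dx where "Dx = min ((norm (x - p))^2) 1 - (norm x)^2"
    define Dy where "Dy = min ((norm (y - p))^2) 1 - (norm y)^2"
    define Dz where "Dz = min ((norm (z - p))^2) 1 - (norm z)^2"
    have D: "l * Dx + m * Dy \<le> Dz" unfolding Dx_def Dy_def Dz_def z_def by (rule min_part_concave[OF lm])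
    have ex: "\<phi> q v x - K * (norm x)^2 = q \<bullet> u - (v \<bullet> (x - p)) / \<beta> + K * Dx"
      by (simp add: \<phi>_def p_def \<beta>_def Dx_def algebra_simps)
    have ey: "\<phi> q v y - K * (norm y)^2 = q \<bullet> u - (v \<bullet> (y - p)) / \<beta> + K * Dy"
      by (simp add: \<phi>_def p_def \<beta>_def Dy_def algebra_simps)
    have ez: "\<phi> q v z - K * (norm z)^2 = q \<bullet> u - (v \<bullet> (z - p)) / \<beta> + K * Dz"
      by (simp add: \<phi>_def p_def \<beta>_def Dz_def algebra_simps)
    have "l * (q \<bullet> u - (v \<bullet> (x - p)) / \<beta> + K * Dx) + m * (q \<bullet> u - (v \<bullet> (y - p)) / \<beta> + K * Dy)
        = (l + m) * (q \<bullet> u) - (l * (v \<bullet> (x - p)) + m * (v \<bullet> (y - p))) / \<beta> + K * (l * Dx + m * Dy)"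
      by (rule comb_eq)
    also have "\<dots> = q \<bullet> u - (v \<bullet> (z - p)) / \<beta> + K * (l * Dx + m * Dy)" using aff lm(3) by simp
    also have "\<dots> \<le> q \<bullet> u - (v \<bullet> (z - p)) / \<beta> + K * Dz" using D K by (simp add: mult_left_mono)
    finally show ?thesis using ex ey ez z_def by simp
  qed
  have conc: "concave_on (perp u) (\<lambda>w. f w - K * (norm w)^2)"
    unfolding concave_on_iff
  proof (intro conjI ballI allI impI)
    show "convex (perp u)" unfolding perp_def using convex_hyperplane[of u 0] by (simp add: inner_commute)
    fix x y and l m :: real assume xy: "x \<in> perp u" "y \<in> perp u" and lm: "0 \<le> l" "0 \<le> m" "l + m = 1"
    define z where "z = l *\<^sub>R x + m *\<^sub>R y"
    define t where "t = l * (f x - K * (norm x)^2) + m * (f y - K * (norm y)^2) + K * (norm z)^2"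
    have "t \<le> f z"
    proof (rule f_ge)
      fix q v assume fq: "fam q v"
      have "l * (f x - K * (norm x)^2) \<le> l * (\<phi> q v x - K * (norm x)^2)"
        using f_le_phi[OF fq, of x] lm by (intro mult_left_mono) auto
      moreover have "m * (f y - K * (norm y)^2) \<le> m * (\<phi> q v y - K * (norm y)^2)"
        using f_le_phi[OF fq, of y] lm by (intro mult_left_mono) auto
      ultimately show "t \<le> \<phi> q v z" using phiconc[OF fq lm, of x y] unfolding t_def z_def by linarith
    next
      have "l * (f x - K * (norm x)^2) \<le> l * (M - K * (norm x)^2)"
        using f_le_M[of x] lm by (intro mult_left_mono) auto
      moreover have "m * (f y - K * (norm y)^2) \<le> m * (M - K * (norm y)^2)"
        using f_le_M[of y] lm by (intro mult_left_mono) auto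
      moreover have "K * (norm z)^2 \<le> K * (l * (norm x)^2 + m * (norm y)^2)"
        using sq_convex[OF lm, of x y] K unfolding z_def by (intro mult_left_mono) auto
      moreover have "l * (M - K * (norm x)^2) + m * (M - K * (norm y)^2) = M - K * (l * (norm x)^2 + m * (norm y)^2)"
      proof -
        have mm: "m = 1 - l" using lm(3) by simp
        show ?thesis by (simp add: mm algebra_simps)
      qed
      ultimately show "t \<le> M" unfolding t_def by linarith
    qed
    then show "l * (f x - K * (norm x)^2) + m * (f y - K * (norm y)^2) \<le> f (l *\<^sub>R x + m *\<^sub>R y) - K * (norm (l *\<^sub>R x + m *\<^sub>R y))^2"
      unfolding t_def z_def by linarith
  qed
  have key_sub: "y \<bullet> u \<le> f (prj u y)" if yA: "y \<in> A" and ya: "norm (y - a) < e" for y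
  proof (rule f_ge)
    have "(y - a) \<bullet> u \<le> norm (y - a)" using abs_inner_le1[OF u1, of "y - a"] by simp
    then show "y \<bullet> u \<le> M" using ya e rho1 by (simp add: M_def inner_diff_left)
  next
    fix q v assume fq: "fam q v"
    have b: "c1 \<le> v \<bullet> u" "v \<bullet> u \<le> 1" "norm v = 1" using famb[OF fq] by auto
    have qA: "q \<in> A" "norm (q - a) \<le> \<rho>1" and nq: "nrm A r q v" using fq by (auto simp: fam_def)
    define d where "d = y - q"
    define s where "s = d \<bullet> u"
    define z where "z = prj u d"
    define \<beta> where "\<beta> = v \<bullet> u"
    have zeq: "prj u y - prj u q = z" by (simp add: z_def d_def prj_diff)
    have vd: "v \<bullet> d = v \<bullet> z + s * \<beta>" using inner_prj[of v u d] by (simp add: z_def s_def \<beta>_def)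
    have dd: "(norm d)^2 = (norm z)^2 + s^2" using norm_decomp[OF u1, of d] by (simp add: z_def s_def)
    have "2*r*(v \<bullet> d) \<le> (norm d)^2" using nq yA by (simp add: nrm_def d_def)
    then have ineq: "2*r*(v \<bullet> z + s * \<beta>) \<le> (norm z)^2 + s^2" using vd dd by simp
    have nd: "norm d \<le> 3 * \<rho>1 / 2"
    proof -
      have "norm d \<le> norm (y - a) + norm (a - q)" unfolding d_def using norm_triangle_ineq[of "y - a" "a - q"] by simp
      then show ?thesis using ya e qA(2) by (simp add: norm_minus_commute)
    qed
    have sd: "\<bar>s\<bar> \<le> norm d" using abs_inner_le1[OF u1, of d] s_def by simp
    have zd: "norm z \<le> norm d" using norm_prj_le[OF u1, of d] z_def by simp
    have s_b: "\<bar>s\<bar> \<le> r * c1" using sd nd rho1 r c1 by linarith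
    have z_r: "norm z \<le> r" using zd nd rho1 r by linarith
    have z_1: "norm z \<le> 1" using zd nd rho1 by linarith
    have az: "\<bar>v \<bullet> z\<bar> \<le> norm z" using Cauchy_Schwarz_ineq2[of v z] b by simp
    have sc: "s \<le> -(v \<bullet> z)/\<beta> + (1 + 9/c1^2)/(2*r*c1) * (norm z)^2"
      by (rule scal[OF c1(1) _ _ r(1) s_b norm_ge_zero z_r az ineq]) (use b \<beta>_def in auto)
    have mz: "min ((norm z)^2) 1 = (norm z)^2" using z_1 by (simp add: power_le_one)
    have "\<phi> q v (prj u y) = q \<bullet> u - (v \<bullet> z) / \<beta> + K * (norm z)^2"
      unfolding \<phi>_def using zeq mz \<beta>_def by simp
    moreover have "y \<bullet> u = q \<bullet> u + s" by (simp add: s_def d_def inner_diff_left)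
    ultimately show "y \<bullet> u \<le> \<phi> q v (prj u y)" using sc K_def by simp
  qed
  have key_sup: "y \<in> A" if ya: "norm (y - a) < e" and yf: "y \<bullet> u \<le> f (prj u y)" for y
  proof (rule ccontr)
    assume yA: "y \<notin> A"
    define \<delta> where "\<delta> = infdist y A"
    have d_le: "\<delta> \<le> norm (y - a)" using infdist_le[OF aA, of y] by (simp add: \<delta>_def dist_norm)
    have dpos: "0 < \<delta>" using infdist_pos_not_in_closed[OF A_closed A_ne yA] \<delta>_def by simp
    have de: "\<delta> < eps" using d_le ya e rho1 r by linarith
    define q where "q = proj y"
    define v where "v = (1 / \<delta>) *\<^sub>R (y - q)"
    have nq: "nrm A r q v" using normal_ineq[of y r] de yA r unfolding q_def v_def \<delta>_def by simp
    have qA: "q \<in> A" using proj_in de q_def \<delta>_def by simp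
    have dyq: "norm (y - q) = \<delta>" using proj_dist de q_def \<delta>_def by (simp add: dist_norm)
    have "norm (q - a) \<le> norm (q - y) + norm (y - a)" using norm_triangle_ineq[of "q - y" "y - a"] by simp
    then have "norm (q - a) \<le> \<rho>1" using dyq d_le ya e by (simp add: norm_minus_commute)
    then have fq: "fam q v" using qA nq by (simp add: fam_def)
    have b: "c1 \<le> v \<bullet> u" "v \<bullet> u \<le> 1" "norm v = 1" using famb[OF fq] by auto
    define \<beta> where "\<beta> = v \<bullet> u"
    have yq: "y - q = \<delta> *\<^sub>R v" using dpos by (simp add: v_def)
    have zq: "prj u y - prj u q = \<delta> *\<^sub>R prj u v" using yq by (simp add: prj_diff prj_scale)
    have vv: "v \<bullet> v = 1" using b(3) by (rule uu1)
    have i1: "v \<bullet> (prj u y - prj u q) = \<delta> * (1 - \<beta>^2)"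
      using zq inner_prj[of v u v] vv by (simp add: \<beta>_def power2_eq_square)
    have np: "(norm (prj u v))^2 = 1 - \<beta>^2" using norm_decomp[OF u1, of v] b(3) by (simp add: \<beta>_def)
    have i2: "(norm (prj u y - prj u q))^2 = \<delta>^2 * (1 - \<beta>^2)"
      using zq np dpos by (simp add: power_mult_distrib)
    have phiv: "\<phi> q v (prj u y) = q \<bullet> u + (- (\<delta> * (1 - \<beta>^2)) / \<beta> + K * min (\<delta>^2 * (1 - \<beta>^2)) 1)"
      unfolding \<phi>_def using i1 i2 \<beta>_def by simp
    have yu: "y \<bullet> u = q \<bullet> u + \<delta> * \<beta>"
    proof -
      have "y = q + \<delta> *\<^sub>R v" using yq by (simp add: algebra_simps)
      then show ?thesis by (simp add: \<beta>_def inner_add_left)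
    qed
    have Kd: "K * \<delta> < 1"
    proof -
      have "K * \<delta> \<le> K * e" using d_le ya K by (intro mult_left_mono) auto
      then show ?thesis using eK by linarith
    qed
    have "- (\<delta> * (1 - \<beta>^2)) / \<beta> + K * min (\<delta>^2 * (1 - \<beta>^2)) 1 < \<delta> * \<beta>"
      by (rule scal2) (use b c1 dpos K Kd \<beta>_def in auto)
    then have "\<phi> q v (prj u y) < y \<bullet> u" using phiv yu by simp
    moreover have "f (prj u y) \<le> \<phi> q v (prj u y)" by (rule f_le_phi[OF fq])
    ultimately show False using yf by simp
  qed
  have hypeq: "A \<inter> ball a e = hyp u f \<inter> ball a e"
  proof (intro equalityI subsetI)
    fix y assume "y \<in> A \<inter> ball a e"
    then have "y \<in> A" "norm (y - a) < e" by (auto simp: dist_norm norm_minus_commute)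
    then show "y \<in> hyp u f \<inter> ball a e" using key_sub hyp_iff[OF u1] \<open>y \<in> A \<inter> ball a e\<close> by auto
  next
    fix y assume "y \<in> hyp u f \<inter> ball a e"
    then have "y \<bullet> u \<le> f (prj u y)" "norm (y - a) < e" using hyp_iff[OF u1] by (auto simp: dist_norm norm_minus_commute)
    then show "y \<in> A \<inter> ball a e" using key_sup \<open>y \<in> hyp u f \<inter> ball a e\<close> by auto
  qed
  show ?thesis using e(1) u1 lip K conc hypeq by (intro exI[of _ e] conjI exI) auto
qed

definition Fq :: "'a::euclidean_space \<Rightarrow> real \<Rightarrow> 'a \<Rightarrow> 'a" where
  "Fq u k x = x + (k * (prj u x \<bullet> prj u x)) *\<^sub>R u"

lemma blp: "bounded_linear (prj u)"
proof -
  have "bounded_linear (\<lambda>x. (x \<bullet> u) *\<^sub>R u)"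
    by (rule bounded_linear_compose[OF bounded_linear_scaleR_left bounded_linear_inner_left])
  then have "bounded_linear (\<lambda>x. x - (x \<bullet> u) *\<^sub>R u)"
    by (intro bounded_linear_sub bounded_linear_ident)
  moreover have "prj u = (\<lambda>x. x - (x \<bullet> u) *\<^sub>R u)" by (rule ext) (simp add: prj_def)
  ultimately show ?thesis by simp
qed

lemma prj_u: "norm u = 1 \<Longrightarrow> prj u u = 0"
  by (simp add: prj_def uu1)

lemma prj_add_u: "norm u = 1 \<Longrightarrow> prj u (x + c *\<^sub>R u) = prj u x"
  by (simp add: prj_def inner_add_left uu1 algebra_simps)

lemma prj_Fq: "norm u = 1 \<Longrightarrow> prj u (Fq u k x) = prj u x"
  unfolding Fq_def by (rule prj_add_u)

lemma Fq_inv: "norm u = 1 \<Longrightarrow> Fq u (-k) (Fq u k x) = x"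
  using prj_Fq[of u k x] by (simp add: Fq_def)

lemma Fq_deriv_lip:
  fixes u :: "'a::euclidean_space"
  assumes u: "norm u = 1"
  shows "\<exists>D. (\<forall>x. (Fq u k has_derivative blinfun_apply (D x)) (at x)) \<and> (\<exists>L. L-lipschitz_on UNIV D)"
proof -
  define Df where "Df x h = h + (2 * k * (prj u x \<bullet> prj u h)) *\<^sub>R u" for x h
  have hp: "(prj u has_derivative prj u) (at x)" for x
    by (rule bounded_linear.has_derivative[OF blp[of u] has_derivative_ident])
  have der: "(Fq u k has_derivative Df x) (at x)" for x
  proof -
    have hi: "((\<lambda>x. prj u x \<bullet> prj u x) has_derivative (\<lambda>h. prj u x \<bullet> prj u h + prj u h \<bullet> prj u x)) (at x)"
      by (rule has_derivative_inner[OF hp hp])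
    have hm: "((\<lambda>x. k * (prj u x \<bullet> prj u x)) has_derivative (\<lambda>h. k * (prj u x \<bullet> prj u h + prj u h \<bullet> prj u x))) (at x)"
      by (rule has_derivative_mult_right[OF hi])
    have hs: "((\<lambda>x. (k * (prj u x \<bullet> prj u x)) *\<^sub>R u) has_derivative (\<lambda>h. (k * (prj u x \<bullet> prj u h + prj u h \<bullet> prj u x)) *\<^sub>R u)) (at x)"
      by (rule has_derivative_scaleR_left[OF hm])
    have ha: "((\<lambda>x. x + (k * (prj u x \<bullet> prj u x)) *\<^sub>R u) has_derivative (\<lambda>h. h + (k * (prj u x \<bullet> prj u h + prj u h \<bullet> prj u x)) *\<^sub>R u)) (at x)"
      by (rule has_derivative_add[OF has_derivative_ident hs])
    have "(\<lambda>h. h + (k * (prj u x \<bullet> prj u h + prj u h \<bullet> prj u x)) *\<^sub>R u) = Df x"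
      by (rule ext) (simp add: Df_def inner_commute algebra_simps)
    then show ?thesis using ha by (simp add: Fq_def[abs_def])
  qed
  have bl: "bounded_linear (Df x)" for x by (rule has_derivative_bounded_linear[OF der])
  define D where "D x = Blinfun (Df x)" for x
  have DA: "blinfun_apply (D x) = Df x" for x using bl by (simp add: D_def bounded_linear_Blinfun_apply)
  have "(\<forall>x. (Fq u k has_derivative blinfun_apply (D x)) (at x))" using der DA by simp
  moreover have "(2 * \<bar>k\<bar>)-lipschitz_on UNIV D"
  proof (rule lipschitz_onI)
    show "0 \<le> 2 * \<bar>k\<bar>" by simp
    fix x y :: 'a
    have "norm (D x - D y) \<le> (2 * \<bar>k\<bar>) * norm (x - y)"
    proof (rule norm_blinfun_bound)
      show "0 \<le> (2 * \<bar>k\<bar>) * norm (x - y)" by simp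
      fix h
      have "Df x h - Df y h = (2 * k * (prj u (x - y) \<bullet> prj u h)) *\<^sub>R u"
        by (simp add: Df_def algebra_simps inner_diff_left flip: prj_diff)
      then have "blinfun_apply (D x - D y) h = (2 * k * (prj u (x - y) \<bullet> prj u h)) *\<^sub>R u"
        by (simp add: blinfun.diff_left DA)
      then have "norm (blinfun_apply (D x - D y) h) = 2 * \<bar>k\<bar> * \<bar>prj u (x - y) \<bullet> prj u h\<bar>"
        using u by (simp add: abs_mult)
      also have "\<dots> \<le> 2 * \<bar>k\<bar> * (norm (prj u (x - y)) * norm (prj u h))"
        by (intro mult_left_mono Cauchy_Schwarz_ineq2) auto
      also have "\<dots> \<le> 2 * \<bar>k\<bar> * (norm (x - y) * norm h)"
        using norm_prj_le[OF u] by (intro mult_left_mono mult_mono) auto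
      finally show "norm (blinfun_apply (D x - D y) h) \<le> 2 * \<bar>k\<bar> * norm (x - y) * norm h"
        by (simp add: mult.assoc)
    qed
    then show "dist (D x) (D y) \<le> 2 * \<bar>k\<bar> * dist x y" by (simp add: dist_norm)
  qed
  ultimately show ?thesis by blast
qed

lemma Fq_C11:
  fixes u :: "'a::euclidean_space"
  assumes u: "norm u = 1"
  shows "C11_diffeo (Fq u k) UNIV UNIV"
proof -
  have inv1: "Fq u (-k) (Fq u k x) = x" for x using Fq_inv[OF u] .
  have inv2: "Fq u k (Fq u (-k) x) = x" for x using Fq_inv[OF u, of "-k"] by simp
  have inj: "inj (Fq u k)" by (metis inv1 injI)
  have bij: "bij_betw (Fq u k) UNIV UNIV"
    unfolding bij_betw_def using inj inv2 by (metis surj_def)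
  have invq: "inv_into UNIV (Fq u k) = Fq u (-k)"
  proof
    fix y show "inv_into UNIV (Fq u k) y = Fq u (-k) y"
      using inv_into_f_eq[OF inj, of "Fq u (-k) y" y] inv2 by simp
  qed
  show ?thesis unfolding C11_diffeo_def invq
    using bij Fq_deriv_lip[OF u, of k] Fq_deriv_lip[OF u, of "-k"] by auto
qed

lemma sqdiff: "\<bar>(norm w)^2 - (norm wa)^2\<bar> \<le> (2 * norm wa + norm (w - wa)) * norm (w - wa)"
proof -
  have "(norm w)^2 - (norm wa)^2 = (norm w + norm wa) * (norm w - norm wa)" by (simp add: power2_eq_square algebra_simps)
  then have "\<bar>(norm w)^2 - (norm wa)^2\<bar> = (norm w + norm wa) * \<bar>norm w - norm wa\<bar>" by (simp add: abs_mult)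
  also have "\<dots> \<le> (2 * norm wa + norm (w - wa)) * norm (w - wa)"
  proof (rule mult_mono)
    have "norm w \<le> norm wa + norm (w - wa)" using norm_triangle_ineq[of wa "w - wa"] by simp
    then show "norm w + norm wa \<le> 2 * norm wa + norm (w - wa)" by simp
    show "\<bar>norm w - norm wa\<bar> \<le> norm (w - wa)" by (rule norm_triangle_ineq3)
  qed auto
  finally show ?thesis .
qed

lemma norm_split: "norm z \<le> norm (prj u z) + \<bar>z \<bullet> u\<bar> * norm u"
proof -
  have "norm z = norm (prj u z + (z \<bullet> u) *\<^sub>R u)" using prj_decomp[of z u] by simp
  also have "\<dots> \<le> norm (prj u z) + norm ((z \<bullet> u) *\<^sub>R u)" by (rule norm_triangle_ineq)
  finally show ?thesis by simp
qed

lemma prj_comb: "prj u (l *\<^sub>R x + m *\<^sub>R y) = l *\<^sub>R prj u x + m *\<^sub>R prj u y"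
  by (simp add: prj_def algebra_simps inner_add_left)

lemma Fq_inner: "norm u = 1 \<Longrightarrow> Fq u k x \<bullet> u = x \<bullet> u + k * (norm (prj u x))^2"
  by (simp add: Fq_def inner_add_left uu1 power2_norm_eq_inner)

lemma main_ii:
  fixes A :: "'a::euclidean_space set" and a :: 'a
  assumes u1: "norm u = 1" and lip: "L-lipschitz_on (perp u) f" and K0: "0 \<le> K"
    and conc: "concave_on (perp u) (\<lambda>w. f w - K * (norm w)^2)"
    and e: "0 < e" and hypeq: "A \<inter> ball a e = hyp u f \<inter> ball a e" and aA: "a \<in> A"
  shows "\<exists>Ks \<Phi>. convex_body Ks \<and> C11_diffeo \<Phi> UNIV UNIV \<and> nbhd_in (\<Phi> ` Ks) A a"
proof -
  define \<Phi> where "\<Phi> = Fq u K"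
  define g where "g w = f w - K * (norm w)^2" for w
  define wa where "wa = prj u a"
  define ta where "ta = a \<bullet> u - K * (norm wa)^2"
  have wap: "wa \<in> perp u" unfolding wa_def by (rule prj_perp[OF u1])
  have "a \<in> A \<inter> ball a e" using aA e by simp
  then have "a \<in> hyp u f \<inter> ball a e" by (simp only: hypeq)
  then have "a \<in> hyp u f" by simp
  then have "a \<bullet> u \<le> f wa" using hyp_iff[OF u1] wa_def by simp
  then have tag: "ta \<le> g wa" by (simp add: ta_def g_def)
  define C where "C = 2 * norm wa + 1"
  have C: "1 \<le> C" by (simp add: C_def)
  define s0 where "s0 = min 1 (e / (2 * (2 + K * C)))"
  have KC: "0 \<le> K * C" using K0 C by simp
  have s0: "0 < s0" "s0 \<le> 1" "s0 * (2 + K * C) \<le> e / 2"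
  proof -
    show "0 < s0" using e KC by (simp add: s0_def)
    show "s0 \<le> 1" by (simp add: s0_def)
    have "s0 \<le> e / (2 * (2 + K * C))" by (simp add: s0_def)
    then have "s0 * (2 + K * C) \<le> e / (2 * (2 + K * C)) * (2 + K * C)" using KC by (intro mult_right_mono) auto
    also have "\<dots> = e / 2" using KC by (simp add: field_simps)
    finally show "s0 * (2 + K * C) \<le> e / 2" .
  qed
  have sq: "K * \<bar>(norm w)^2 - (norm wa)^2\<bar> \<le> K * C * t" if "norm (w - wa) \<le> t" "t \<le> 1" for w t
  proof -
    have "\<bar>(norm w)^2 - (norm wa)^2\<bar> \<le> (2 * norm wa + norm (w - wa)) * norm (w - wa)" by (rule sqdiff)
    also have "\<dots> \<le> C * t" unfolding C_def using that by (intro mult_mono) auto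
    finally show ?thesis using K0 by (simp add: mult.assoc mult_left_mono)
  qed
  define Ks where "Ks = {x. norm (prj u x - wa) \<le> s0 \<and> ta - s0 \<le> x \<bullet> u \<and> x \<bullet> u \<le> ta + s0 \<and> x \<bullet> u \<le> g (prj u x)}"
  have imgA: "\<Phi> ` Ks \<subseteq> A"
  proof
    fix y assume "y \<in> \<Phi> ` Ks"
    then obtain x where x: "x \<in> Ks" "y = \<Phi> x" by blast
    define w where "w = prj u x"
    have pyw: "prj u y = w" using x prj_Fq[OF u1] by (simp add: \<Phi>_def w_def)
    have yu: "y \<bullet> u = x \<bullet> u + K * (norm w)^2" using x Fq_inner[OF u1] by (simp add: \<Phi>_def w_def)
    have xK: "norm (w - wa) \<le> s0" "ta - s0 \<le> x \<bullet> u" "x \<bullet> u \<le> ta + s0" "x \<bullet> u \<le> g w"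
      using x(1) by (auto simp: Ks_def w_def)
    have "y \<bullet> u \<le> f (prj u y)" using yu xK(4) pyw by (simp add: g_def)
    then have yh: "y \<in> hyp u f" using hyp_iff[OF u1] by simp
    have "(y - a) \<bullet> u = (x \<bullet> u - ta) + K * ((norm w)^2 - (norm wa)^2)"
      using yu by (simp add: ta_def inner_diff_left algebra_simps)
    moreover have "K * \<bar>(norm w)^2 - (norm wa)^2\<bar> \<le> K * C * s0" using sq[OF xK(1) s0(2)] .
    ultimately have i1: "\<bar>(y - a) \<bullet> u\<bar> \<le> s0 + K * C * s0"
    proof -
      assume eq: "(y - a) \<bullet> u = (x \<bullet> u - ta) + K * ((norm w)^2 - (norm wa)^2)"
        and kb: "K * \<bar>(norm w)^2 - (norm wa)^2\<bar> \<le> K * C * s0"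
      have "\<bar>K * ((norm w)^2 - (norm wa)^2)\<bar> = K * \<bar>(norm w)^2 - (norm wa)^2\<bar>" using K0 by (simp add: abs_mult)
      moreover have "\<bar>x \<bullet> u - ta\<bar> \<le> s0" using xK by (simp add: abs_le_iff)
      moreover have "\<bar>(x \<bullet> u - ta) + K * ((norm w)^2 - (norm wa)^2)\<bar> \<le> \<bar>x \<bullet> u - ta\<bar> + \<bar>K * ((norm w)^2 - (norm wa)^2)\<bar>"
        by (rule abs_triangle_ineq)
      ultimately show ?thesis using eq kb by linarith
    qed
    have "prj u (y - a) = w - wa" using pyw wa_def by (simp flip: prj_diff)
    then have "norm (y - a) \<le> norm (w - wa) + \<bar>(y - a) \<bullet> u\<bar>" using norm_split[of "y - a" u] u1 by simp
    also have "\<dots> \<le> s0 * (2 + K * C)" using xK(1) i1 by (simp add: algebra_simps)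
    finally have "norm (y - a) < e" using s0 e by linarith
    then have "y \<in> ball a e" by (simp add: dist_norm norm_minus_commute)
    then have "y \<in> hyp u f \<inter> ball a e" using yh by simp
    then have "y \<in> A \<inter> ball a e" by (simp only: hypeq)
    then show "y \<in> A" by simp
  qed
  define \<delta> where "\<delta> = min e (min 1 (s0 / (1 + K * C)))"
  have dl: "0 < \<delta>" "\<delta> \<le> e" "\<delta> \<le> 1" "\<delta> * (1 + K * C) \<le> s0"
  proof -
    show "0 < \<delta>" using e s0 KC by (simp add: \<delta>_def)
    show "\<delta> \<le> e" "\<delta> \<le> 1" by (auto simp: \<delta>_def)
    have "\<delta> \<le> s0 / (1 + K * C)" by (simp add: \<delta>_def)
    then show "\<delta> * (1 + K * C) \<le> s0" using KC by (simp add: le_divide_eq)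
  qed
  have nb: "A \<inter> ball a \<delta> \<subseteq> \<Phi> ` Ks"
  proof
    fix y assume y: "y \<in> A \<inter> ball a \<delta>"
    then have ya: "norm (y - a) < \<delta>" by (simp add: dist_norm norm_minus_commute)
    have "dist a y < e" using y dl by simp
    then have "y \<in> A \<inter> ball a e" using y by simp
    then have "y \<in> hyp u f \<inter> ball a e" by (simp only: hypeq)
    then have "y \<in> hyp u f" by simp
    then have yf: "y \<bullet> u \<le> f (prj u y)" using hyp_iff[OF u1] by simp
    define x where "x = Fq u (-K) y"
    define w where "w = prj u y"
    have pxw: "prj u x = w" using prj_Fq[OF u1] by (simp add: x_def w_def)
    have xu: "x \<bullet> u = y \<bullet> u - K * (norm w)^2" using Fq_inner[OF u1] by (simp add: x_def w_def)
    have ww: "norm (w - wa) \<le> \<delta>"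
    proof -
      have "w - wa = prj u (y - a)" by (simp add: w_def wa_def prj_diff)
      then have "norm (w - wa) \<le> norm (y - a)" using norm_prj_le[OF u1] by simp
      then show ?thesis using ya by simp
    qed
    have "\<delta> * 1 \<le> \<delta> * (1 + K * C)" using dl KC by (intro mult_left_mono) auto
    then have "\<delta> \<le> s0" using dl by linarith
    then have c1: "norm (prj u x - wa) \<le> s0" using ww pxw by simp
    have "x \<bullet> u - ta = (y - a) \<bullet> u - K * ((norm w)^2 - (norm wa)^2)"
      using xu by (simp add: ta_def inner_diff_left algebra_simps)
    moreover have "\<bar>(y - a) \<bullet> u\<bar> \<le> \<delta>" using abs_inner_le1[OF u1, of "y - a"] ya by simp
    moreover have "K * \<bar>(norm w)^2 - (norm wa)^2\<bar> \<le> K * C * \<delta>" using sq[OF ww dl(3)] .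
    ultimately have "\<bar>x \<bullet> u - ta\<bar> \<le> \<delta> * (1 + K * C)"
    proof -
      assume eq: "x \<bullet> u - ta = (y - a) \<bullet> u - K * ((norm w)^2 - (norm wa)^2)"
        and b1: "\<bar>(y - a) \<bullet> u\<bar> \<le> \<delta>" and kb: "K * \<bar>(norm w)^2 - (norm wa)^2\<bar> \<le> K * C * \<delta>"
      have "\<bar>K * ((norm w)^2 - (norm wa)^2)\<bar> = K * \<bar>(norm w)^2 - (norm wa)^2\<bar>" using K0 by (simp add: abs_mult)
      moreover have "\<bar>(y - a) \<bullet> u - K * ((norm w)^2 - (norm wa)^2)\<bar> \<le> \<bar>(y - a) \<bullet> u\<bar> + \<bar>K * ((norm w)^2 - (norm wa)^2)\<bar>"
        by (rule abs_triangle_ineq4)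
      moreover have "\<delta> * (1 + K * C) = \<delta> + K * C * \<delta>" by (simp add: algebra_simps)
      ultimately show ?thesis using eq b1 kb by linarith
    qed
    then have c2: "\<bar>x \<bullet> u - ta\<bar> \<le> s0" using dl by linarith
    have c3: "x \<bullet> u \<le> g (prj u x)" using xu yf pxw by (simp add: g_def w_def)
    have "x \<in> Ks" using c1 c2 c3 by (auto simp: Ks_def abs_le_iff)
    moreover have "y = \<Phi> x" using Fq_inv[OF u1, of "-K" y] by (simp add: \<Phi>_def x_def)
    ultimately show "y \<in> \<Phi> ` Ks" by blast
  qed
  have nbhd: "nbhd_in (\<Phi> ` Ks) A a" unfolding nbhd_in_def using imgA nb dl(1) by blast
  have contf: "continuous_on (perp u) f" by (rule lipschitz_on_continuous_on[OF lip])
  have contg: "continuous_on UNIV (\<lambda>x. g (prj u x))"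
  proof -
    have cp: "continuous_on UNIV (prj u)" by (rule linear_continuous_on[OF blp])
    have "continuous_on UNIV (\<lambda>x. f (prj u x))"
      by (rule continuous_on_compose2[OF contf cp]) (use prj_perp[OF u1] in auto)
    moreover have "continuous_on UNIV (\<lambda>x. K * (norm (prj u x))^2)"
      by (intro continuous_intros cp)
    ultimately show ?thesis unfolding g_def by (intro continuous_on_diff)
  qed
  have closedK: "closed Ks"
  proof -
    have cp: "continuous_on UNIV (prj u)" by (rule linear_continuous_on[OF blp])
    have "Ks = {x. norm (prj u x - wa) \<le> s0} \<inter> {x. ta - s0 \<le> x \<bullet> u} \<inter> {x. x \<bullet> u \<le> ta + s0} \<inter> {x. x \<bullet> u \<le> g (prj u x)}"
      by (auto simp: Ks_def)
    moreover have "closed {x. norm (prj u x - wa) \<le> s0}" by (intro closed_Collect_le continuous_intros cp)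
    moreover have "closed {x. ta - s0 \<le> x \<bullet> u}" by (intro closed_Collect_le continuous_intros)
    moreover have "closed {x. x \<bullet> u \<le> ta + s0}" by (intro closed_Collect_le continuous_intros)
    moreover have "closed {x. x \<bullet> u \<le> g (prj u x)}" by (rule closed_Collect_le[OF _ contg]) (intro continuous_intros)
    ultimately show ?thesis by (simp add: closed_Int)
  qed
  have boundedK: "bounded Ks"
    unfolding bounded_iff
  proof (intro exI ballI)
    fix x assume x: "x \<in> Ks"
    have "norm (prj u x) \<le> norm wa + norm (prj u x - wa)" using norm_triangle_ineq[of wa "prj u x - wa"] by simp
    then have "norm (prj u x) \<le> norm wa + s0" using x by (auto simp: Ks_def)
    moreover have "\<bar>x \<bullet> u\<bar> \<le> \<bar>ta\<bar> + s0" using x by (auto simp: Ks_def)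
    moreover have "norm x \<le> norm (prj u x) + \<bar>x \<bullet> u\<bar>" using norm_split[of x u] u1 by simp
    ultimately show "norm x \<le> norm wa + s0 + (\<bar>ta\<bar> + s0)" by linarith
  qed
  have convexK: "convex Ks"
  proof (rule convexI)
    fix x y and l m :: real assume x: "x \<in> Ks" and y: "y \<in> Ks" and lm: "0 \<le> l" "0 \<le> m" "l + m = 1"
    define z where "z = l *\<^sub>R x + m *\<^sub>R y"
    have pz: "prj u z = l *\<^sub>R prj u x + m *\<^sub>R prj u y" by (simp add: z_def prj_comb)
    have zu: "z \<bullet> u = l * (x \<bullet> u) + m * (y \<bullet> u)" by (simp add: z_def inner_add_left)
    have xK: "norm (prj u x - wa) \<le> s0" "ta - s0 \<le> x \<bullet> u" "x \<bullet> u \<le> ta + s0" "x \<bullet> u \<le> g (prj u x)"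
      using x by (auto simp: Ks_def)
    have yK: "norm (prj u y - wa) \<le> s0" "ta - s0 \<le> y \<bullet> u" "y \<bullet> u \<le> ta + s0" "y \<bullet> u \<le> g (prj u y)"
      using y by (auto simp: Ks_def)
    have "prj u z - wa = l *\<^sub>R (prj u x - wa) + m *\<^sub>R (prj u y - wa)"
      using lm(3) pz by (simp add: algebra_simps flip: scaleR_add_left)
    then have "norm (prj u z - wa) \<le> l * norm (prj u x - wa) + m * norm (prj u y - wa)"
      using lm by (metis (no_types, lifting) abs_of_nonneg norm_scaleR norm_triangle_ineq order_trans order.refl)
    also have "\<dots> \<le> l * s0 + m * s0" using xK yK lm by (intro add_mono mult_left_mono) auto
    finally have z1: "norm (prj u z - wa) \<le> s0" using lm(3) by (simp add: algebra_simps flip: distrib_right)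
    have bnd: "l * (ta - s0) + m * (ta - s0) \<le> z \<bullet> u" "z \<bullet> u \<le> l * (ta + s0) + m * (ta + s0)"
      using xK yK lm zu by (auto intro!: add_mono mult_left_mono)
    have z2: "ta - s0 \<le> z \<bullet> u" "z \<bullet> u \<le> ta + s0"
      using bnd lm(3) by (simp_all add: algebra_simps flip: distrib_right)
    have gc: "l * g (prj u x) + m * g (prj u y) \<le> g (l *\<^sub>R prj u x + m *\<^sub>R prj u y)"
      using conc prj_perp[OF u1] lm unfolding concave_on_iff g_def by blast
    have "z \<bullet> u \<le> l * g (prj u x) + m * g (prj u y)" using zu xK yK lm by (auto intro!: add_mono mult_left_mono)
    then have z3: "z \<bullet> u \<le> g (prj u z)" using gc pz by simp
    show "l *\<^sub>R x + m *\<^sub>R y \<in> Ks" using z1 z2 z3 by (simp add: Ks_def z_def)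
  qed
  have intK: "interior Ks \<noteq> {}"
  proof -
    define Lg where "Lg = L + K * C"
    have L0: "0 \<le> L" using lip by (simp add: lipschitz_on_def)
    have Lg0: "0 \<le> Lg" using L0 KC by (simp add: Lg_def)
    define r0 where "r0 = s0 / (2 * (Lg + 1))"
    have r0: "0 < r0" "r0 * (Lg + 1) \<le> s0 / 2" "r0 \<le> s0 / 2"
    proof -
      show "0 < r0" using s0 Lg0 by (simp add: r0_def)
      have "r0 * (Lg + 1) = s0 / 2" unfolding r0_def using Lg0 by (simp add: field_simps)
      then show "r0 * (Lg + 1) \<le> s0 / 2" by simp
      have "r0 * 1 \<le> r0 * (Lg + 1)" using \<open>0 < r0\<close> Lg0 by (intro mult_left_mono) auto
      then show "r0 \<le> s0 / 2" using \<open>r0 * (Lg + 1) \<le> s0 / 2\<close> by simp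
    qed
    define x0 where "x0 = wa + (ta - s0/2) *\<^sub>R u"
    have px0: "prj u x0 = wa" using prj_add_u[OF u1] prj_id[OF wap] by (simp add: x0_def)
    have x0u: "x0 \<bullet> u = ta - s0/2" using wap u1 by (simp add: x0_def inner_add_left perp_def uu1)
    have "ball x0 r0 \<subseteq> Ks"
    proof
      fix x assume "x \<in> ball x0 r0"
      then have xx: "norm (x - x0) < r0" by (simp add: dist_norm norm_minus_commute)
      have pw: "norm (prj u x - wa) \<le> norm (x - x0)"
        using norm_prj_le[OF u1, of "x - x0"] px0 by (simp flip: prj_diff)
      have "\<bar>x \<bullet> u - x0 \<bullet> u\<bar> \<le> norm (x - x0)" using abs_inner_le1[OF u1, of "x - x0"] by (simp add: inner_diff_left)
      then have xu: "\<bar>x \<bullet> u - (ta - s0/2)\<bar> < r0" using xx x0u by simp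
      have c1: "norm (prj u x - wa) \<le> s0" using pw xx r0 by linarith
      have r01: "r0 \<le> 1" using r0 s0 by linarith
      have "f wa - f (prj u x) \<le> L * norm (prj u x - wa)"
      proof -
        have "\<bar>f wa - f (prj u x)\<bar> \<le> L * norm (wa - prj u x)"
          using lipschitz_onD[OF lip wap prj_perp[OF u1, of x]] by (simp add: dist_real_def dist_norm)
        then show ?thesis by (simp add: abs_le_iff norm_minus_commute)
      qed
      moreover have "K * \<bar>(norm (prj u x))^2 - (norm wa)^2\<bar> \<le> K * C * r0"
        using sq[of "prj u x" r0] pw xx r01 by simp
      moreover have "L * norm (prj u x - wa) \<le> L * r0" using pw xx L0 by (intro mult_left_mono) auto
      ultimately have "g wa - g (prj u x) \<le> Lg * r0"
      proof -
        assume f1: "f wa - f (prj u x) \<le> L * norm (prj u x - wa)"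
          and kb: "K * \<bar>(norm (prj u x))^2 - (norm wa)^2\<bar> \<le> K * C * r0"
          and l1: "L * norm (prj u x - wa) \<le> L * r0"
        have "K * ((norm (prj u x))^2 - (norm wa)^2) \<le> K * \<bar>(norm (prj u x))^2 - (norm wa)^2\<bar>"
          using K0 by (intro mult_left_mono) auto
        moreover have "g wa - g (prj u x) = (f wa - f (prj u x)) + K * ((norm (prj u x))^2 - (norm wa)^2)"
          by (simp add: g_def algebra_simps)
        moreover have "Lg * r0 = L * r0 + K * C * r0" by (simp add: Lg_def algebra_simps)
        ultimately show ?thesis using f1 kb l1 by linarith
      qed
      then have c3: "x \<bullet> u \<le> g (prj u x)" using tag xu r0 by (simp add: algebra_simps abs_less_iff)
      show "x \<in> Ks" using c1 c3 xu r0 by (auto simp: Ks_def abs_less_iff)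
    qed
    then have "x0 \<in> interior Ks" using r0 by (intro interiorI[of "ball x0 r0"]) auto
    then show ?thesis by blast
  qed
  have "convex_body Ks" unfolding convex_body_def
    using compact_eq_bounded_closed closedK boundedK convexK intK by blast
  moreover have "C11_diffeo \<Phi> UNIV UNIV" unfolding \<Phi>_def by (rule Fq_C11[OF u1])
  ultimately show ?thesis using nbhd by blast
qed

theorem proposition6p1:
  fixes A :: "'a::euclidean_space set" and a :: 'a
  assumes "positive_reach A"
    and "a \<in> T_dim A DIM('a)"
    and "a \<in> frontier A"
  shows "(DIM('a) \<ge> 2 \<longrightarrow>
           (\<exists>\<epsilon>>0. \<exists>u f. norm u = 1 \<and> (\<exists>L. L-lipschitz_on (perp u) f) \<and> semiconcave u f \<and>
              A \<inter> ball a \<epsilon> = hyp u f \<inter> ball a \<epsilon>))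
       \<and> (\<exists>K \<Phi>. convex_body K \<and> C11_diffeo \<Phi> UNIV UNIV \<and> nbhd_in (\<Phi> ` K) A a)"
proof -
  obtain eps where eps: "eps > 0" "\<forall>x. infdist x A < eps \<longrightarrow> (\<exists>!p. p \<in> A \<and> (\<forall>q\<in>A. dist x p \<le> dist x q))"
    using assms(1) unfolding positive_reach_def by blast
  have PR: "preach A eps"
  proof
    show "eps > 0" by (rule eps(1))
    fix x :: 'a assume "infdist x A < eps"
    then show "\<exists>!p. isnear A x p" using eps(2) unfolding isnear_def by blast
  qed
  have aA: "a \<in> A" and dT: "dim (span (Tan A a)) = DIM('a)" using assms(2) by (auto simp: T_dim_def)
  have "span (span (Tan A a)) = UNIV" using dT dim_eq_full by blast
  then have sp: "span (Tan A a) = UNIV" by (simp add: span_span)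
  obtain e u f K where e: "e > 0" and u: "norm u = 1" and lip: "\<exists>L. L-lipschitz_on (perp u) f"
    and K: "0 \<le> K" and conc: "concave_on (perp u) (\<lambda>w. f w - K * (norm w)^2)"
    and hq: "A \<inter> ball a e = hyp u f \<inter> ball a e"
    using main_i[OF PR aA sp] by blast
  have sc: "semiconcave u f" unfolding semiconcave_def
  proof (intro exI conjI)
    show "0 \<le> 2 * K" using K by simp
    show "concave_on (perp u) (\<lambda>w. f w - 2 * K / 2 * (norm w)\<^sup>2)" using conc by simp
  qed
  obtain L where L: "L-lipschitz_on (perp u) f" using lip by blast
  have part1: "\<exists>\<epsilon>>0. \<exists>u f. norm u = 1 \<and> (\<exists>L. L-lipschitz_on (perp u) f) \<and> semiconcave u f \<and>
              A \<inter> ball a \<epsilon> = hyp u f \<inter> ball a \<epsilon>"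
    using e u lip sc hq by blast
  have part2: "\<exists>K \<Phi>. convex_body K \<and> C11_diffeo \<Phi> UNIV UNIV \<and> nbhd_in (\<Phi> ` K) A a"
    by (rule main_ii[OF u L K conc e hq aA])
  show ?thesis using part1 part2 by blast
qed

end
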